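(* Let $P_0,\dots,P_n$ be a transformation sequence constructed by using the transformation rules R1–R9 (defined in the context), and let $p$ be a non-basic predicate in $P_n$. Assume that: 1. if the folding rule is applied for the derivation of a clause $C$ in program $P_{k+1}$ from clauses $C_1,\dots,C_m$ in program $P_k$ using clauses $D_1,\dots,D_m$ in $\mathit{Defs}_k$, with $0\le k<n$, then for every $i\in\{1,\dots,m\}$ there exists $j\in\{1,\dots,n-1\}$ such that $D_i$ occurs in $P_j$ and $P_{j+1}$ is derived from $P_j$ by unfolding $D_i$; 2. during the transformation sequence $P_0,\dots,P_n$ the definition elimination rule either is never applied or it is applied w.r.t. predicate $p$ once only, in the last step, i.e. when deriving $P_n$ from $P_{n-1}$. Then, for every ground atom $A$ with predicate $p$, $M(P_0\cup\mathit{Defs}_n)\models A$ iff $M(P_n)\models A$.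
   Context: Syntax. There are infinite, pairwise disjoint sets of variables, function symbols (each with an arity) and predicate symbols (each with an arity). The predicate symbols $\mathit{true}$ (arity 0), $=$ and $\neq$ (arity 2) are basic; all other predicate symbols are non-basic. Terms are built from variables and function symbols. A basic atom is $\mathit{true}$, $t_1=t_2$ (an equation) or $t_1\neq t_2$ (a disequation); a non-basic atom is $p(t_1,\dots,t_m)$ with $p$ non-basic. A goal is a conjunction $G_1,G_2$ of atoms, where "," is associative with neutral element $\mathit{true}$. A clause $C$ is $A\leftarrow G$ with $A$ a non-basic atom (its head $hd(C)$) and $G$ a goal (its body $bd(C)$); it is a clause for $p$ if its head has predicate $p$. A program is a set of clauses. In a program $P$, $p$ depends on $q$ iff $(p,q)$ is in the transitive closure of the relation "some clause for $p$ in $P$ has $q$ in its body"; $p$ depends on a clause $C$ iff either $C$ is a clause for $p$ or $C$ is a clause for some $q$ on which $p$ depends. A renamed apart clause is a variant of a clause whose variables are fresh. All mgu's are relevant and idempotent. Declarative semantics. An $\mathcal H$-interpretation is a set $I$ of ground non-basic atoms. $I\models \mathit{true}$; $I\models t=t$ for every ground term $t$; $I\models t_1\neq t_2$ for distinct ground terms $t_1,t_2$; $I\models A$ iff $A\in I$ for ground non-basic $A$; $I\models G_1,G_2$ iff $I\models G_1$ and $I\models G_2$; $I\models C$ for a ground clause iff $I\models hd(C)$ or $I\not\models bd(C)$; $I\models P$ iff $I\models C$ for every ground instance $C$ of a clause of $P$. $M(P)$ denotes the least (w.r.t. inclusion) $\mathcal H$-interpretation $I$ with $I\models P$. Transformation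 rules. A transformation sequence is a sequence of programs $P_0,\dots,P_n$ where for each $k<n$, $P_{k+1}$ is derived from $P_k$ by one of the rules below. $\mathit{Defs}_k$ is the set of clauses (definition clauses) introduced by R1 during the construction of $P_0,\dots,P_k$ ($\mathit{Defs}_0=\emptyset$). R1 (Definition introduction): $P_{k+1}=P_k\cup\{D_1,\dots,D_m\}$, $m\ge1$, where $D_j$ is $\mathit{newp}(X_1,\dots,X_h)\leftarrow \mathit{Body}_j$, $\mathit{newp}$ is a non-basic predicate not occurring in $P_0,\dots,P_k$, $X_1,\dots,X_h$ are distinct variables each occurring in some $\mathit{Body}_j$, every non-basic predicate in each $\mathit{Body}_j$ occurs in $P_0$, and each $\mathit{Body}_j$ contains at least one non-basic atom. R2 (Definition elimination w.r.t. $p$): $P_{k+1}=\{C\in P_k\mid p \text{ depends on } C\}$. R3 (Unfolding): let $C$ be a renamed apart clause $H\leftarrow G_1,A,G_2$ of $P_k$ with $A$ non-basic, and let $C_1,\dots,C_m$ ($m\ge0$) be the clauses of $P_k$ whose heads unify with $A$, via mgu's $\vartheta_1,\dots,\vartheta_m$; then $P_{k+1}=(P_k-\{C\})\cup\{D_1,\dots,D_m\}$ with $D_i=(H\leftarrow G_1,bd(C_i),G_2)\vartheta_i$. R4 (Folding): let $C_i: H\leftarrow G_1,\mathit{Body}_i\vartheta,G_2$ ($i=1,\dots,m$) be renamed clauses of $P_k$ and $D_i:\mathit{newp}(X_1,\dots,X_h)\leftarrow \mathit{Body}_i$ ($i=1,\dots,m$) be all clauses of $\mathit{Defs}_k$ with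 head predicate $\mathit{newp}$, such that for every $i$ and every variable $X$ of $\mathit{Body}_i$ not in $\{X_1,\dots,X_h\}$: $X\vartheta$ is a variable not occurring in $(H,G_1,G_2)$, and $X\vartheta$ does not occur in $Y\vartheta$ for any variable $Y\neq X$ of $\mathit{Body}_i$. Then $P_{k+1}=(P_k-\{C_1,\dots,C_m\})\cup\{E\}$ with $E: H\leftarrow G_1,\mathit{newp}(X_1,\dots,X_h)\vartheta,G_2$. R5 (Subsumption): a clause $H\leftarrow G_1$ subsumes $(H\leftarrow G_1,G_2)\vartheta$ for any substitution $\vartheta$; $P_{k+1}$ is $P_k$ minus a clause subsumed by another clause of $P_k$. R6 (Head generalization): for a clause $C: H\{X/t\}\leftarrow \mathit{Body}$ in $P_k$ where $X$ occurs in $H$ and $X$ does not occur in $C$, replace $C$ by $H\leftarrow X=t,\mathit{Body}$. R7 (Case split): for a clause $C: H\leftarrow \mathit{Body}$ in $P_k$ and a binding $X/t$ with $X$ not occurring in $t$, replace $C$ by the two clauses $(H\leftarrow\mathit{Body})\{X/t\}$ and $H\leftarrow X\neq t,\mathit{Body}$. R8 (Equation elimination): for $C_1: H\leftarrow G_1,t_1=t_2,G_2$ in $P_k$: if $t_1,t_2$ unify with mgu $\vartheta$, replace $C_1$ by $(H\leftarrow G_1,G_2)\vartheta$; otherwise delete $C_1$. R9 (Disequation replacement), for a clause $C$ of $P_k$: (1) if $C$ is $H\leftarrow G_1,t_1\neq t_2,G_2$ with $t_1,t_2$ not unifiable, replace it by $H\leftarrow G_1,G_2$; (2) if $C$ is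 $H\leftarrow G_1,f(t_1,\dots,t_m)\neq f(u_1,\dots,u_m),G_2$, replace it by the $m$ clauses $H\leftarrow G_1,t_i\neq u_i,G_2$; (3) if $C$ is $H\leftarrow G_1,X\neq X,G_2$, remove it; (4) if $C$ is $H\leftarrow G_1,t\neq X,G_2$, replace it by $H\leftarrow G_1,X\neq t,G_2$; (5) if $C$ is $H\leftarrow G_1,X\neq t_1,G_2,X\neq t_2,G_3$ and there is a bijection $\rho$ from the local variables of $X\neq t_1$ in $C$ onto those of $X\neq t_2$ in $C$ with $t_1\rho=t_2$, replace it by $H\leftarrow G_1,X\neq t_1,G_2,G_3$. (A variable $X$ is a local variable of goal $G$ in clause $H\leftarrow G_1,G,G_2$ iff $X\in vars(G)-vars(H,G_1,G_2)$.) *)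

theory Defs
  imports Main
begin

section \<open>Syntax\<close>

text \<open>Variables and symbol names are natural numbers (infinite, pairwise disjoint sorts).
  A function (predicate) symbol is identified by its name together with its arity,
  i.e. by the name and the number of arguments it is applied to.\<close>

datatype trm = Var nat | Fn nat "trm list"

text \<open>The basic atom true is the neutral element of conjunction and is represented by
  the empty goal (goals are lists of atoms, conjunction is list append).\<close>
datatype atom = Eq trm trm | Neq trm trm | Rel nat "trm list"

type_synonym goal = "atom list"
type_synonym hatom = "nat \<times> trm list"   \<comment> \<open>non-basic atom (head)\<close>
type_synonym pred = "nat \<times> nat"        \<comment> \<open>non-basic predicate: name and arity\<close>

datatype clause = Cl (hd: hatom) (bd: goal)

type_synonym program = "clause set"

fun tvars :: "trm \<Rightarrow> nat set" where
  "tvars (Var x) = {x}"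
| "tvars (Fn f ts) = (\<Union>t\<in>set ts. tvars t)"

definition tsvars :: "trm list \<Rightarrow> nat set" where
  "tsvars ts = (\<Union>t\<in>set ts. tvars t)"

fun avars :: "atom \<Rightarrow> nat set" where
  "avars (Eq t u) = tvars t \<union> tvars u"
| "avars (Neq t u) = tvars t \<union> tvars u"
| "avars (Rel p ts) = tsvars ts"

definition gvars :: "goal \<Rightarrow> nat set" where
  "gvars G = (\<Union>a\<in>set G. avars a)"

definition hvars :: "hatom \<Rightarrow> nat set" where
  "hvars H = tsvars (snd H)"

definition cvars :: "clause \<Rightarrow> nat set" where
  "cvars C = hvars (hd C) \<union> gvars (bd C)"

definition hpred :: "hatom \<Rightarrow> pred" where
  "hpred H = (fst H, length (snd H))"

fun apred :: "atom \<Rightarrow> pred set" where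
  "apred (Rel p ts) = {(p, length ts)}"
| "apred _ = {}"

definition gpreds :: "goal \<Rightarrow> pred set" where
  "gpreds G = (\<Union>a\<in>set G. apred a)"

definition is_nonbasic :: "atom \<Rightarrow> bool" where
  "is_nonbasic a = (\<exists>p ts. a = Rel p ts)"

definition prog_preds :: "program \<Rightarrow> pred set" where
  "prog_preds P = (\<Union>C\<in>P. {hpred (hd C)} \<union> gpreds (bd C))"

section \<open>Substitutions\<close>

type_synonym subst = "nat \<Rightarrow> trm"

fun subst_tm :: "subst \<Rightarrow> trm \<Rightarrow> trm" where
  "subst_tm \<sigma> (Var x) = \<sigma> x"
| "subst_tm \<sigma> (Fn f ts) = Fn f (map (subst_tm \<sigma>) ts)"

fun subst_at :: "subst \<Rightarrow> atom \<Rightarrow> atom" where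
  "subst_at \<sigma> (Eq t u) = Eq (subst_tm \<sigma> t) (subst_tm \<sigma> u)"
| "subst_at \<sigma> (Neq t u) = Neq (subst_tm \<sigma> t) (subst_tm \<sigma> u)"
| "subst_at \<sigma> (Rel p ts) = Rel p (map (subst_tm \<sigma>) ts)"

definition subst_goal :: "subst \<Rightarrow> goal \<Rightarrow> goal" where
  "subst_goal \<sigma> G = map (subst_at \<sigma>) G"

definition subst_hd :: "subst \<Rightarrow> hatom \<Rightarrow> hatom" where
  "subst_hd \<sigma> H = (fst H, map (subst_tm \<sigma>) (snd H))"

definition subst_cl :: "subst \<Rightarrow> clause \<Rightarrow> clause" where
  "subst_cl \<sigma> C = Cl (subst_hd \<sigma> (hd C)) (subst_goal \<sigma> (bd C))"

definition unifier :: "subst \<Rightarrow> trm list \<Rightarrow> trm list \<Rightarrow> bool" where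
  "unifier \<sigma> ts us = (map (subst_tm \<sigma>) ts = map (subst_tm \<sigma>) us)"

definition unifiable :: "trm list \<Rightarrow> trm list \<Rightarrow> bool" where
  "unifiable ts us = (\<exists>\<sigma>. unifier \<sigma> ts us)"

text \<open>Relevant, idempotent most general unifier.\<close>
definition is_mgu :: "subst \<Rightarrow> trm list \<Rightarrow> trm list \<Rightarrow> bool" where
  "is_mgu \<sigma> ts us =
     (unifier \<sigma> ts us
      \<and> (\<forall>\<tau>. unifier \<tau> ts us \<longrightarrow> (\<exists>\<eta>. \<forall>x. \<tau> x = subst_tm \<eta> (\<sigma> x)))
      \<and> (\<forall>x. subst_tm \<sigma> (\<sigma> x) = \<sigma> x)
      \<and> (\<forall>x. \<sigma> x \<noteq> Var x \<longrightarrow>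
             x \<in> tsvars ts \<union> tsvars us \<and> tvars (\<sigma> x) \<subseteq> tsvars ts \<union> tsvars us))"

definition hunifiable :: "atom \<Rightarrow> hatom \<Rightarrow> bool" where
  "hunifiable a H = (\<exists>q us. a = Rel q us \<and> q = fst H \<and> unifiable us (snd H))"

definition is_hmgu :: "subst \<Rightarrow> atom \<Rightarrow> hatom \<Rightarrow> bool" where
  "is_hmgu \<sigma> a H = (\<exists>q us. a = Rel q us \<and> q = fst H \<and> is_mgu \<sigma> us (snd H))"

text \<open>A renaming maps variables injectively to variables.\<close>
definition ren :: "(nat \<Rightarrow> nat) \<Rightarrow> subst" where
  "ren \<rho> = (\<lambda>x. Var (\<rho> x))"

section \<open>Dependencies\<close>

definition dep1 :: "program \<Rightarrow> (pred \<times> pred) set" where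
  "dep1 P = {(p, q). \<exists>C\<in>P. hpred (hd C) = p \<and> q \<in> gpreds (bd C)}"

definition depends :: "program \<Rightarrow> pred \<Rightarrow> pred \<Rightarrow> bool" where
  "depends P p q = ((p, q) \<in> (dep1 P)\<^sup>+)"

definition depends_cl :: "program \<Rightarrow> pred \<Rightarrow> clause \<Rightarrow> bool" where
  "depends_cl P p C = (C \<in> P \<and> (hpred (hd C) = p \<or> depends P p (hpred (hd C))))"

section \<open>Transformation rules\<close>

text \<open>Labels recording which rule was applied at each step
  (with the data that the hypotheses of the theorem refer to).\<close>
datatype rule_app =
    RDef "clause set"     \<comment> \<open>R1, with the introduced definition clauses\<close>
  | RElim pred            \<comment> \<open>R2, w.r.t. the given predicate\<close>
  | RUnfold clause        \<comment> \<open>R3, unfolding the given clause\<close>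
  | RFold pred            \<comment> \<open>R4, folding using the definitions of the given predicate\<close>
  | RSubsume | RHeadGen | RCaseSplit | REqElim | RDiseq

definition defs_upto :: "(nat \<Rightarrow> rule_app) \<Rightarrow> nat \<Rightarrow> clause set" where
  "defs_upto lab k = \<Union>{Ds. \<exists>j<k. lab j = RDef Ds}"

definition def_intro :: "(nat \<Rightarrow> program) \<Rightarrow> nat \<Rightarrow> clause set \<Rightarrow> program \<Rightarrow> bool" where
  "def_intro Ps k Ds P' =
    (finite Ds \<and> Ds \<noteq> {} \<and>
     (\<exists>newp Xs. distinct Xs \<and>
        (\<forall>D\<in>Ds. hd D = (newp, map Var Xs)) \<and>
        (\<forall>x\<in>set Xs. \<exists>D\<in>Ds. x \<in> gvars (bd D)) \<and>
        (\<forall>j\<le>k. (newp, length Xs) \<notin> prog_preds (Ps j)) \<and>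
        (\<forall>D\<in>Ds. gpreds (bd D) \<subseteq> prog_preds (Ps 0)) \<and>
        (\<forall>D\<in>Ds. \<exists>a\<in>set (bd D). is_nonbasic a)) \<and>
     P' = Ps k \<union> Ds)"

definition def_elim :: "program \<Rightarrow> pred \<Rightarrow> program \<Rightarrow> bool" where
  "def_elim P p P' = (P' = {C\<in>P. depends_cl P p C})"

text \<open>Unfolding clause C of P at atom A: every clause D of P is renamed apart
  (injective variable renaming rho D, sharing no variable with C); for those whose
  renamed head unifies with A, an mgu sigma D is taken.\<close>
definition unfold_step :: "program \<Rightarrow> clause \<Rightarrow> program \<Rightarrow> bool" where
  "unfold_step P C P' =
    (C \<in> P \<and>
     (\<exists>G1 A G2 \<rho> \<sigma>. bd C = G1 @ [A] @ G2 \<and> is_nonbasic A \<and>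
        (\<forall>D\<in>P. inj (\<rho> D) \<and> cvars (subst_cl (ren (\<rho> D)) D) \<inter> cvars C = {}) \<and>
        (\<forall>D\<in>P. hunifiable A (hd (subst_cl (ren (\<rho> D)) D)) \<longrightarrow>
                 is_hmgu (\<sigma> D) A (hd (subst_cl (ren (\<rho> D)) D))) \<and>
        P' = (P - {C}) \<union>
             {subst_cl (\<sigma> D) (Cl (hd C) (G1 @ bd (subst_cl (ren (\<rho> D)) D) @ G2)) | D.
                D \<in> P \<and> hunifiable A (hd (subst_cl (ren (\<rho> D)) D))}))"

text \<open>Folding using all definition clauses Ds (in Defs_k) with head predicate newp.
  Each D in Ds is matched by a (renamed) clause of P, namely the renaming via rho D
  of the clause Cf D of P.\<close>
definition fold_step :: "clause set \<Rightarrow> program \<Rightarrow> pred \<Rightarrow> program \<Rightarrow> bool" where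
  "fold_step Defs P newp P' =
    (let Ds = {D\<in>Defs. hpred (hd D) = newp} in
     Ds \<noteq> {} \<and>
     (\<exists>H G1 G2 \<theta> Cf \<rho>.
        (\<forall>D\<in>Ds. Cf D \<in> P \<and> inj (\<rho> D) \<and>
           subst_cl (ren (\<rho> D)) (Cf D) = Cl H (G1 @ subst_goal \<theta> (bd D) @ G2)) \<and>
        (\<forall>D\<in>Ds. \<forall>X\<in>gvars (bd D). X \<notin> hvars (hd D) \<longrightarrow>
           (\<exists>Z. \<theta> X = Var Z \<and> Z \<notin> hvars H \<union> gvars G1 \<union> gvars G2 \<and>
                (\<forall>Y\<in>gvars (bd D). Y \<noteq> X \<longrightarrow> Z \<notin> tvars (\<theta> Y)))) \<and>
        (\<forall>D\<in>Ds. P' = (P - Cf ` Ds) \<union> {Cl H (G1 @ [Rel (fst newp) (map (subst_tm \<theta>) (snd (hd D)))] @ G2)})))"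

definition subsumes :: "clause \<Rightarrow> clause \<Rightarrow> bool" where
  "subsumes C C' = (\<exists>\<theta> G2. C' = subst_cl \<theta> (Cl (hd C) (bd C @ G2)))"

definition subsume_step :: "program \<Rightarrow> program \<Rightarrow> bool" where
  "subsume_step P P' = (\<exists>C\<in>P. \<exists>C'\<in>P. C \<noteq> C' \<and> subsumes C C' \<and> P' = P - {C'})"

definition headgen_step :: "program \<Rightarrow> program \<Rightarrow> bool" where
  "headgen_step P P' =
    (\<exists>C\<in>P. \<exists>H X t. X \<in> hvars H \<and> X \<notin> cvars C \<and> hd C = subst_hd (Var(X := t)) H \<and>
        P' = (P - {C}) \<union> {Cl H (Eq (Var X) t # bd C)})"

definition casesplit_step :: "program \<Rightarrow> program \<Rightarrow> bool" where
  "casesplit_step P P' =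
    (\<exists>C\<in>P. \<exists>X t. X \<notin> tvars t \<and>
        P' = (P - {C}) \<union> {subst_cl (Var(X := t)) C, Cl (hd C) (Neq (Var X) t # bd C)})"

definition eqelim_step :: "program \<Rightarrow> program \<Rightarrow> bool" where
  "eqelim_step P P' =
    (\<exists>C\<in>P. \<exists>G1 t1 t2 G2. bd C = G1 @ [Eq t1 t2] @ G2 \<and>
       (if unifiable [t1] [t2]
        then (\<exists>\<theta>. is_mgu \<theta> [t1] [t2] \<and> P' = (P - {C}) \<union> {subst_cl \<theta> (Cl (hd C) (G1 @ G2))})
        else P' = P - {C}))"

definition local_vars :: "hatom \<Rightarrow> goal \<Rightarrow> goal \<Rightarrow> goal \<Rightarrow> nat set" where
  "local_vars H G1 G G2 = gvars G - (hvars H \<union> gvars G1 \<union> gvars G2)"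

definition diseq_step :: "program \<Rightarrow> program \<Rightarrow> bool" where
  "diseq_step P P' =
    (\<exists>C\<in>P. let H = hd C in
       (\<exists>G1 t1 t2 G2. bd C = G1 @ [Neq t1 t2] @ G2 \<and> \<not> unifiable [t1] [t2] \<and>
          P' = (P - {C}) \<union> {Cl H (G1 @ G2)})
     \<or> (\<exists>G1 f ts us G2. bd C = G1 @ [Neq (Fn f ts) (Fn f us)] @ G2 \<and> length ts = length us \<and>
          P' = (P - {C}) \<union> {Cl H (G1 @ [Neq (ts ! i) (us ! i)] @ G2) | i. i < length ts})
     \<or> (\<exists>G1 X G2. bd C = G1 @ [Neq (Var X) (Var X)] @ G2 \<and> P' = P - {C})
     \<or> (\<exists>G1 t X G2. bd C = G1 @ [Neq t (Var X)] @ G2 \<and>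
          P' = (P - {C}) \<union> {Cl H (G1 @ [Neq (Var X) t] @ G2)})
     \<or> (\<exists>G1 X t1 G2 t2 G3 \<rho>.
          bd C = G1 @ [Neq (Var X) t1] @ G2 @ [Neq (Var X) t2] @ G3 \<and>
          bij_betw \<rho> (local_vars H G1 [Neq (Var X) t1] (G2 @ [Neq (Var X) t2] @ G3))
                     (local_vars H (G1 @ [Neq (Var X) t1] @ G2) [Neq (Var X) t2] G3) \<and>
          subst_tm (\<lambda>x. if x \<in> local_vars H G1 [Neq (Var X) t1] (G2 @ [Neq (Var X) t2] @ G3)
                         then Var (\<rho> x) else Var x) t1 = t2 \<and>
          P' = (P - {C}) \<union> {Cl H (G1 @ [Neq (Var X) t1] @ G2 @ G3)}))"

definition tstep :: "(nat \<Rightarrow> program) \<Rightarrow> (nat \<Rightarrow> rule_app) \<Rightarrow> nat \<Rightarrow> bool" where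
  "tstep Ps lab k =
    (let P = Ps k; P' = Ps (Suc k) in
     case lab k of
       RDef Ds \<Rightarrow> def_intro Ps k Ds P'
     | RElim p \<Rightarrow> def_elim P p P'
     | RUnfold C \<Rightarrow> unfold_step P C P'
     | RFold newp \<Rightarrow> fold_step (defs_upto lab k) P newp P'
     | RSubsume \<Rightarrow> subsume_step P P'
     | RHeadGen \<Rightarrow> headgen_step P P'
     | RCaseSplit \<Rightarrow> casesplit_step P P'
     | REqElim \<Rightarrow> eqelim_step P P'
     | RDiseq \<Rightarrow> diseq_step P P')"

definition transf_seq :: "(nat \<Rightarrow> program) \<Rightarrow> (nat \<Rightarrow> rule_app) \<Rightarrow> nat \<Rightarrow> bool" where
  "transf_seq Ps lab n = (\<forall>k<n. tstep Ps lab k)"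

section \<open>Declarative semantics\<close>

definition ground :: "trm \<Rightarrow> bool" where
  "ground t = (tvars t = {})"

definition ground_hatom :: "hatom \<Rightarrow> bool" where
  "ground_hatom A = (\<forall>t\<in>set (snd A). ground t)"

definition ground_subst :: "subst \<Rightarrow> bool" where
  "ground_subst \<sigma> = (\<forall>x. ground (\<sigma> x))"

fun hsat :: "hatom set \<Rightarrow> atom \<Rightarrow> bool" where
  "hsat I (Eq t u) = (t = u)"
| "hsat I (Neq t u) = (t \<noteq> u)"
| "hsat I (Rel p ts) = ((p, ts) \<in> I)"

definition gsat :: "hatom set \<Rightarrow> goal \<Rightarrow> bool" where
  "gsat I G = (\<forall>a\<in>set G. hsat I a)"

definition herbrand_interp :: "hatom set \<Rightarrow> bool" where
  "herbrand_interp I = (\<forall>A\<in>I. ground_hatom A)"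

definition models :: "hatom set \<Rightarrow> program \<Rightarrow> bool" where
  "models I P = (\<forall>C\<in>P. \<forall>\<sigma>. ground_subst \<sigma> \<longrightarrow>
      gsat I (bd (subst_cl \<sigma> C)) \<longrightarrow> hd (subst_cl \<sigma> C) \<in> I)"

definition least_model :: "program \<Rightarrow> hatom set" where
  "least_model P = \<Inter>{I. herbrand_interp I \<and> models I P}"

end

theory Submission
  imports Defs
begin

definition scomp :: "subst \<Rightarrow> subst \<Rightarrow> subst" where
  "scomp \<tau> \<sigma> = (\<lambda>x. subst_tm \<tau> (\<sigma> x))"

lemma subst_tm_comp: "subst_tm \<tau> (subst_tm \<sigma> t) = subst_tm (scomp \<tau> \<sigma>) t"
  by (induction t) (auto simp: scomp_def)

lemma subst_tm_o_scomp[simp]: "subst_tm \<tau> \<circ> subst_tm \<sigma> = subst_tm (scomp \<tau> \<sigma>)"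
  by (auto simp: subst_tm_comp)

lemma subst_tm_cong: "(\<And>x. x \<in> tvars t \<Longrightarrow> \<sigma> x = \<sigma>' x) \<Longrightarrow> subst_tm \<sigma> t = subst_tm \<sigma>' t"
  by (induction t) auto

lemma tvars_subst: "tvars (subst_tm \<sigma> t) = (\<Union>x\<in>tvars t. tvars (\<sigma> x))"
  by (induction t) auto

lemma subst_tm_ground: "tvars t = {} \<Longrightarrow> subst_tm \<sigma> t = t"
proof (induction t)
  case (Fn f ts) then show ?case by (auto intro: map_idI)
qed auto

lemma ground_subst_tm: "ground_subst \<sigma> \<Longrightarrow> tvars (subst_tm \<sigma> t) = {}"
  by (auto simp: tvars_subst ground_subst_def ground_def)

lemma subst_tm_Var[simp]: "subst_tm Var t = t"
  by (induction t) (auto intro: map_idI)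


lemma subst_at_comp: "subst_at \<tau> (subst_at \<sigma> a) = subst_at (scomp \<tau> \<sigma>) a"
  by (cases a) (auto simp: subst_tm_comp)

lemma subst_goal_comp: "subst_goal \<tau> (subst_goal \<sigma> G) = subst_goal (scomp \<tau> \<sigma>) G"
  by (auto simp: subst_goal_def subst_at_comp)

lemma subst_hd_comp: "subst_hd \<tau> (subst_hd \<sigma> H) = subst_hd (scomp \<tau> \<sigma>) H"
  by (auto simp: subst_hd_def subst_tm_comp)

lemma subst_cl_comp: "subst_cl \<tau> (subst_cl \<sigma> C) = subst_cl (scomp \<tau> \<sigma>) C"
  by (auto simp: subst_cl_def subst_goal_comp subst_hd_comp)

lemma hd_subst_cl[simp]: "hd (subst_cl \<sigma> C) = subst_hd \<sigma> (hd C)"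
  and bd_subst_cl[simp]: "bd (subst_cl \<sigma> C) = subst_goal \<sigma> (bd C)"
  by (auto simp: subst_cl_def)

lemma subst_goal_append[simp]: "subst_goal \<sigma> (G1 @ G2) = subst_goal \<sigma> G1 @ subst_goal \<sigma> G2"
  and subst_goal_Cons[simp]: "subst_goal \<sigma> (a # G) = subst_at \<sigma> a # subst_goal \<sigma> G"
  and subst_goal_Nil[simp]: "subst_goal \<sigma> [] = []"
  by (auto simp: subst_goal_def)

lemma tsvars_cong: "(\<And>x. x \<in> tsvars ts \<Longrightarrow> \<sigma> x = \<sigma>' x) \<Longrightarrow> map (subst_tm \<sigma>) ts = map (subst_tm \<sigma>') ts"
  unfolding tsvars_def by (intro map_cong refl subst_tm_cong) auto

lemma subst_at_cong: "(\<And>x. x \<in> avars a \<Longrightarrow> \<sigma> x = \<sigma>' x) \<Longrightarrow> subst_at \<sigma> a = subst_at \<sigma>' a"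
  by (cases a) (auto simp: tsvars_def intro!: subst_tm_cong)

lemma subst_goal_cong: "(\<And>x. x \<in> gvars G \<Longrightarrow> \<sigma> x = \<sigma>' x) \<Longrightarrow> subst_goal \<sigma> G = subst_goal \<sigma>' G"
  by (auto simp: subst_goal_def gvars_def intro: subst_at_cong)

lemma subst_hd_cong: "(\<And>x. x \<in> hvars H \<Longrightarrow> \<sigma> x = \<sigma>' x) \<Longrightarrow> subst_hd \<sigma> H = subst_hd \<sigma>' H"
  by (auto simp: subst_hd_def hvars_def tsvars_def intro!: subst_tm_cong)

lemma subst_cl_cong: "(\<And>x. x \<in> cvars C \<Longrightarrow> \<sigma> x = \<sigma>' x) \<Longrightarrow> subst_cl \<sigma> C = subst_cl \<sigma>' C"
  by (auto simp: subst_cl_def cvars_def intro: subst_hd_cong subst_goal_cong)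

lemma gvars_append[simp]: "gvars (G1 @ G2) = gvars G1 \<union> gvars G2"
  and gvars_Cons[simp]: "gvars (a # G) = avars a \<union> gvars G"
  and gvars_Nil[simp]: "gvars [] = {}"
  by (auto simp: gvars_def)

lemma gpreds_append[simp]: "gpreds (G1 @ G2) = gpreds G1 \<union> gpreds G2"
  and gpreds_Cons[simp]: "gpreds (a # G) = apred a \<union> gpreds G"
  and gpreds_Nil[simp]: "gpreds [] = {}"
  by (auto simp: gpreds_def)

lemma apred_subst[simp]: "apred (subst_at \<sigma> a) = apred a"
  by (cases a) auto

lemma gpreds_subst[simp]: "gpreds (subst_goal \<sigma> G) = gpreds G"
  by (auto simp: gpreds_def subst_goal_def)

lemma hpred_subst[simp]: "hpred (subst_hd \<sigma> H) = hpred H"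
  by (auto simp: hpred_def subst_hd_def)

lemma gsat_append[simp]: "gsat I (G1 @ G2) = (gsat I G1 \<and> gsat I G2)"
  and gsat_Cons[simp]: "gsat I (a # G) = (hsat I a \<and> gsat I G)"
  and gsat_Nil[simp]: "gsat I []"
  by (auto simp: gsat_def)

lemma hsat_basic: "\<not> is_nonbasic a \<Longrightarrow> hsat I a = hsat J a"
  by (cases a) (auto simp: is_nonbasic_def)

fun hat :: "atom \<Rightarrow> hatom list" where
  "hat (Rel p ts) = [(p, ts)]"
| "hat _ = []"

definition batoms :: "goal \<Rightarrow> hatom list" where
  "batoms G = concat (map hat G)"

lemma batoms_simps[simp]: "batoms [] = []" "batoms (a # G) = hat a @ batoms G"
  "batoms (G1 @ G2) = batoms G1 @ batoms G2"
  by (auto simp: batoms_def)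

lemma in_batoms: "(p, ts) \<in> set (batoms G) \<longleftrightarrow> Rel p ts \<in> set G"
proof (induction G)
  case (Cons a G) then show ?case by (cases a) auto
qed auto

definition wsum :: "(hatom \<Rightarrow> nat) \<Rightarrow> goal \<Rightarrow> nat" where
  "wsum w G = sum_list (map w (batoms G))"

lemma wsum_simps[simp]: "wsum w [] = 0" "wsum w (G1 @ G2) = wsum w G1 + wsum w G2"
  "wsum w (Rel p ts # G) = w (p, ts) + wsum w G"
  "wsum w (Eq t u # G) = wsum w G" "wsum w (Neq t u # G) = wsum w G"
  by (auto simp: wsum_def)

lemma wsum_le: "Rel p ts \<in> set G \<Longrightarrow> w (p, ts) \<le> wsum w G"
  unfolding wsum_def by (rule member_le_sum_list) (auto simp: in_batoms)

lemma gsat_iff: "gsat I G \<longleftrightarrow> (\<forall>a\<in>set G. \<not> is_nonbasic a \<longrightarrow> hsat {} a) \<and> set (batoms G) \<subseteq> I"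
proof (induction G)
  case (Cons a G) then show ?case by (cases a) (auto simp: is_nonbasic_def)
qed auto

inductive prov :: "program \<Rightarrow> (clause \<Rightarrow> nat) \<Rightarrow> hatom \<Rightarrow> nat \<Rightarrow> bool" for Q c where
  "C \<in> Q \<Longrightarrow> ground_subst \<sigma> \<Longrightarrow> hd (subst_cl \<sigma> C) = A
   \<Longrightarrow> (\<forall>a\<in>set (bd (subst_cl \<sigma> C)). \<not> is_nonbasic a \<longrightarrow> hsat {} a)
   \<Longrightarrow> list_all2 (prov Q c) (batoms (bd (subst_cl \<sigma> C))) ns
   \<Longrightarrow> prov Q c A (c C + sum_list ns)"

lemma ground_hd: "ground_subst \<sigma> \<Longrightarrow> ground_hatom (subst_hd \<sigma> H)"
  by (auto simp: ground_hatom_def subst_hd_def ground_def ground_subst_tm)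

lemma prov_ground: "prov Q c A n \<Longrightarrow> ground_hatom A"
  by (induction rule: prov.induct) (metis ground_hd hd_subst_cl)

lemma list_all2_in: "list_all2 P xs ys \<Longrightarrow> x \<in> set xs \<Longrightarrow> \<exists>y. P x y"
  by (induction rule: list_all2_induct) auto

lemma prov_in_model: "prov Q c A n \<Longrightarrow> models I Q \<Longrightarrow> A \<in> I"
proof (induction rule: prov.induct)
  case (1 C \<sigma> A ns)
  have "set (batoms (bd (subst_cl \<sigma> C))) \<subseteq> I"
    using list_all2_in[OF "1.IH"] "1.prems" by blast
  then have "gsat I (bd (subst_cl \<sigma> C))" using "1.hyps"(4) by (simp add: gsat_iff)
  then show ?case using "1.hyps" "1.prems" unfolding models_def by auto
qed

lemma ex_list_all2: "\<forall>x\<in>set xs. \<exists>n. P x n \<Longrightarrow> \<exists>ns. list_all2 P xs ns"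
proof (induction xs)
  case Nil then show ?case by auto
next
  case (Cons a xs)
  then obtain n ns where "P a n" "list_all2 P xs ns" by auto
  then show ?case by (intro exI[of _ "n # ns"]) auto
qed

lemma prov_models: "models {A. \<exists>n. prov Q c A n} Q"
  unfolding models_def
proof (intro ballI allI impI)
  fix C \<sigma> assume C: "C \<in> Q" and g: "ground_subst \<sigma>" and s: "gsat {A. \<exists>n. prov Q c A n} (bd (subst_cl \<sigma> C))"
  from s have b: "\<forall>a\<in>set (bd (subst_cl \<sigma> C)). \<not> is_nonbasic a \<longrightarrow> hsat {} a"
    and "\<forall>x\<in>set (batoms (bd (subst_cl \<sigma> C))). \<exists>n. prov Q c x n" by (auto simp: gsat_iff)
  then obtain ns where "list_all2 (prov Q c) (batoms (bd (subst_cl \<sigma> C))) ns"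
    using ex_list_all2 by blast
  then have "prov Q c (hd (subst_cl \<sigma> C)) (c C + sum_list ns)"
    using prov.intros[OF C g refl b] by blast
  then show "hd (subst_cl \<sigma> C) \<in> {A. \<exists>n. prov Q c A n}" by blast
qed

lemma lm_char: "least_model Q = {A. \<exists>n. prov Q c A n}"
proof
  show "least_model Q \<subseteq> {A. \<exists>n. prov Q c A n}"
  proof -
    have "herbrand_interp {A. \<exists>n. prov Q c A n}" using prov_ground by (auto simp: herbrand_interp_def)
    then show ?thesis unfolding least_model_def using prov_models[of Q c] by blast
  qed
  show "{A. \<exists>n. prov Q c A n} \<subseteq> least_model Q"
    unfolding least_model_def using prov_in_model by blast
qed

lemma lm_models: "models (least_model Q) Q"
  using prov_models lm_char by metis

lemma lm_herbrand: "herbrand_interp (least_model Q)"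
  using lm_char[of Q "\<lambda>_. 0"] prov_ground by (auto simp: herbrand_interp_def)

lemma lm_least: "herbrand_interp I \<Longrightarrow> models I Q \<Longrightarrow> least_model Q \<subseteq> I"
  unfolding least_model_def by auto


definition valid :: "hatom set \<Rightarrow> clause \<Rightarrow> bool" where
  "valid I C = (\<forall>\<sigma>. ground_subst \<sigma> \<longrightarrow> gsat I (subst_goal \<sigma> (bd C)) \<longrightarrow> subst_hd \<sigma> (hd C) \<in> I)"

lemma models_valid: "models I P = (\<forall>C\<in>P. valid I C)"
  by (auto simp: models_def valid_def)

lemma ground_comp: "ground_subst \<sigma> \<Longrightarrow> ground_subst (scomp \<sigma> \<theta>)"
  by (auto simp: ground_subst_def scomp_def ground_def ground_subst_tm)

lemma valid_inst: "valid I C \<Longrightarrow> valid I (subst_cl \<theta> C)"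
  unfolding valid_def
  by (metis bd_subst_cl ground_comp hd_subst_cl subst_cl_comp)

lemma subst_eq_agree: "subst_tm \<sigma> t = subst_tm \<sigma>' t \<Longrightarrow> x \<in> tvars t \<Longrightarrow> \<sigma> x = \<sigma>' x"
proof (induction t)
  case (Fn f ts) then show ?case by (auto simp: map_eq_conv)
qed auto

lemma mgu_unifier: "is_mgu \<mu> ts us \<Longrightarrow> map (subst_tm \<mu>) ts = map (subst_tm \<mu>) us"
  by (auto simp: is_mgu_def unifier_def)

lemma map_subst_comp: "map (subst_tm \<tau>) (map (subst_tm \<sigma>) ts) = map (subst_tm (scomp \<tau> \<sigma>)) ts"
  by (auto simp: subst_tm_comp)

definition gsub :: subst where "gsub = (\<lambda>_. Fn 0 [])"

lemma ground_gsub_comp: "ground_subst (\<lambda>x. subst_tm gsub (\<eta> x))"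
  by (auto simp: ground_subst_def ground_def tvars_subst gsub_def)

lemma mgu_factor:
  assumes "is_mgu \<mu> ts us" "map (subst_tm \<gamma>) ts = map (subst_tm \<gamma>) us" "ground_subst \<gamma>"
  shows "\<exists>\<tau>. ground_subst \<tau> \<and> scomp \<tau> \<mu> = \<gamma>"
proof -
  from assms(1,2) obtain \<eta> where eta: "\<forall>x. \<gamma> x = subst_tm \<eta> (\<mu> x)"
    unfolding is_mgu_def unifier_def by blast
  define \<tau> where "\<tau> = (\<lambda>x. subst_tm gsub (\<eta> x))"
  have "scomp \<tau> \<mu> x = \<gamma> x" for x
  proof -
    have "scomp \<tau> \<mu> x = subst_tm gsub (subst_tm \<eta> (\<mu> x))"
      by (simp add: scomp_def \<tau>_def subst_tm_comp)
    also have "\<dots> = subst_tm gsub (\<gamma> x)" using eta by simp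
    also have "\<dots> = \<gamma> x" using assms(3) by (simp add: subst_tm_ground ground_subst_def ground_def)
    finally show ?thesis .
  qed
  then show ?thesis using ground_gsub_comp \<tau>_def by blast
qed

lemma hmgu_unif:
  assumes "is_hmgu \<mu> A H"
  shows "\<exists>us. A = Rel (fst H) us \<and> map (subst_tm \<mu>) us = map (subst_tm \<mu>) (snd H) \<and> is_mgu \<mu> us (snd H)"
  using assms mgu_unifier by (auto simp: is_hmgu_def)

lemma unfold_sound:
  assumes m: "models I P" and u: "unfold_step P C P'"
  shows "models I P'"
proof -
  from u obtain G1 A G2 \<rho> \<sigma> where C: "C \<in> P" and bdC: "bd C = G1 @ [A] @ G2"
    and mg: "\<forall>D\<in>P. hunifiable A (hd (subst_cl (ren (\<rho> D)) D)) \<longrightarrow>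
                 is_hmgu (\<sigma> D) A (hd (subst_cl (ren (\<rho> D)) D))"
    and P': "P' = (P - {C}) \<union>
             {subst_cl (\<sigma> D) (Cl (hd C) (G1 @ bd (subst_cl (ren (\<rho> D)) D) @ G2)) | D.
                D \<in> P \<and> hunifiable A (hd (subst_cl (ren (\<rho> D)) D))}"
    unfolding unfold_step_def by blast
  have vC: "valid I C" using m C by (auto simp: models_valid)
  have "valid I (subst_cl (\<sigma> D) (Cl (hd C) (G1 @ bd (subst_cl (ren (\<rho> D)) D) @ G2)))"
    if D: "D \<in> P" and hu: "hunifiable A (hd (subst_cl (ren (\<rho> D)) D))" for D
  proof -
    define R where "R = subst_cl (ren (\<rho> D)) D"
    have vR: "valid I R" using m D valid_inst by (auto simp: models_valid R_def)
    obtain us where A: "A = Rel (fst (hd R)) us" and un: "map (subst_tm (\<sigma> D)) us = map (subst_tm (\<sigma> D)) (snd (hd R))"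
      using hmgu_unif[of "\<sigma> D" A "hd R"] mg D hu R_def by blast
    have "valid I (subst_cl (\<sigma> D) (Cl (hd C) (G1 @ bd R @ G2)))" unfolding valid_def
    proof (intro allI impI)
      fix \<tau> assume g: "ground_subst \<tau>"
        and s: "gsat I (subst_goal \<tau> (bd (subst_cl (\<sigma> D) (Cl (hd C) (G1 @ bd R @ G2)))))"
      define \<gamma> where "\<gamma> = scomp \<tau> (\<sigma> D)"
      have g2: "ground_subst \<gamma>" using g ground_comp \<gamma>_def by auto
      from s have s1: "gsat I (subst_goal \<gamma> G1)" "gsat I (subst_goal \<gamma> (bd R))" "gsat I (subst_goal \<gamma> G2)"
        by (auto simp: subst_cl_def subst_goal_comp \<gamma>_def)
      have hR: "subst_hd \<gamma> (hd R) \<in> I" using vR s1(2) g2 unfolding valid_def by blast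
      have "map (subst_tm \<gamma>) us = map (subst_tm \<gamma>) (snd (hd R))"
        using arg_cong[OF un, of "map (subst_tm \<tau>)"] by (simp add: map_subst_comp \<gamma>_def)
      then have "hsat I (subst_at \<gamma> A)" using hR A by (auto simp: subst_hd_def)
      then have "gsat I (subst_goal \<gamma> (bd C))" using s1 bdC by simp
      then have "subst_hd \<gamma> (hd C) \<in> I" using vC g2 unfolding valid_def by blast
      then show "subst_hd \<tau> (hd (subst_cl (\<sigma> D) (Cl (hd C) (G1 @ bd R @ G2)))) \<in> I"
        by (simp add: subst_cl_def subst_hd_comp \<gamma>_def)
    qed
    then show ?thesis by (simp add: R_def)
  qed
  then show ?thesis using m P' by (auto simp: models_valid)
qed


definition wp :: "hatom set \<Rightarrow> (hatom \<Rightarrow> nat) \<Rightarrow> program \<Rightarrow> program \<Rightarrow> bool" where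
  "wp I w P P' = (\<forall>C\<in>P. \<forall>\<sigma>. ground_subst \<sigma> \<longrightarrow> gsat I (subst_goal \<sigma> (bd C)) \<longrightarrow>
     (\<exists>C'\<in>P'. \<exists>\<sigma>'. ground_subst \<sigma>' \<and> subst_hd \<sigma>' (hd C') = subst_hd \<sigma> (hd C) \<and>
        gsat I (subst_goal \<sigma>' (bd C')) \<and> wsum w (subst_goal \<sigma>' (bd C')) \<le> wsum w (subst_goal \<sigma> (bd C))))"

lemma wpI:
  assumes "\<And>C \<sigma>. C \<in> P \<Longrightarrow> C \<notin> P' \<Longrightarrow> ground_subst \<sigma> \<Longrightarrow> gsat I (subst_goal \<sigma> (bd C)) \<Longrightarrow>
     (\<exists>C'\<in>P'. \<exists>\<sigma>'. ground_subst \<sigma>' \<and> subst_hd \<sigma>' (hd C') = subst_hd \<sigma> (hd C) \<and>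
        gsat I (subst_goal \<sigma>' (bd C')) \<and> wsum w (subst_goal \<sigma>' (bd C')) \<le> wsum w (subst_goal \<sigma> (bd C)))"
  shows "wp I w P P'"
  unfolding wp_def
proof (intro ballI allI impI)
  fix C \<sigma> assume "C \<in> P" "ground_subst \<sigma>" "gsat I (subst_goal \<sigma> (bd C))"
  then show "\<exists>C'\<in>P'. \<exists>\<sigma>'. ground_subst \<sigma>' \<and> subst_hd \<sigma>' (hd C') = subst_hd \<sigma> (hd C) \<and>
        gsat I (subst_goal \<sigma>' (bd C')) \<and> wsum w (subst_goal \<sigma>' (bd C')) \<le> wsum w (subst_goal \<sigma> (bd C))"
    using assms by (cases "C \<in> P'") auto
qed

lemma wp_subset: "P \<subseteq> P' \<Longrightarrow> wp I w P P'"
  by (rule wpI) auto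

lemma models_subset: "models I P \<Longrightarrow> P' \<subseteq> P \<Longrightarrow> models I P'"
  by (auto simp: models_def)

lemma wsum_subst_Eq[simp]: "wsum w (subst_goal \<sigma> G1 @ subst_at \<sigma> (Eq t u) # G2) = wsum w (subst_goal \<sigma> G1 @ G2)"
  and wsum_subst_Neq[simp]: "wsum w (subst_goal \<sigma> G1 @ subst_at \<sigma> (Neq t u) # G2) = wsum w (subst_goal \<sigma> G1 @ G2)"
  by auto

lemma scomp_upd: "scomp \<sigma> (Var(X := t)) = \<sigma>(X := subst_tm \<sigma> t)"
  by (auto simp: scomp_def)

lemma subsume_sound: "models I P \<Longrightarrow> subsume_step P P' \<Longrightarrow> models I P'"
  by (auto simp: subsume_step_def models_def)

lemma subsume_wp: "subsume_step P P' \<Longrightarrow> wp I w P P'"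
proof -
  assume "subsume_step P P'"
  then obtain C C' \<theta> G2 where C: "C \<in> P" "C' \<in> P" "C \<noteq> C'" and C': "C' = subst_cl \<theta> (Cl (hd C) (bd C @ G2))"
    and P': "P' = P - {C'}" unfolding subsume_step_def subsumes_def by blast
  show ?thesis
  proof (rule wpI)
    fix D \<sigma> assume "D \<in> P" "D \<notin> P'" "ground_subst \<sigma>" and s: "gsat I (subst_goal \<sigma> (bd D))"
    then have D: "D = C'" using P' by auto
    have "subst_hd (scomp \<sigma> \<theta>) (hd C) = subst_hd \<sigma> (hd D)"
      "subst_goal \<sigma> (bd D) = subst_goal (scomp \<sigma> \<theta>) (bd C) @ subst_goal (scomp \<sigma> \<theta>) G2"
      using D C' by (auto simp: subst_cl_def subst_hd_comp subst_goal_comp)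
    then show "\<exists>C'\<in>P'. \<exists>\<sigma>'. ground_subst \<sigma>' \<and> subst_hd \<sigma>' (hd C') = subst_hd \<sigma> (hd D) \<and>
        gsat I (subst_goal \<sigma>' (bd C')) \<and> wsum w (subst_goal \<sigma>' (bd C')) \<le> wsum w (subst_goal \<sigma> (bd D))"
      using s C P' \<open>ground_subst \<sigma>\<close> ground_comp by (intro bexI[of _ C] exI[of _ "scomp \<sigma> \<theta>"]) auto
  qed
qed

lemma hvars_subst_hd: "hvars (subst_hd \<theta> H) = (\<Union>x\<in>hvars H. tvars (\<theta> x))"
  by (auto simp: hvars_def subst_hd_def tsvars_def tvars_subst)

lemma headgen_sound: "models I P \<Longrightarrow> headgen_step P P' \<Longrightarrow> models I P'"
proof -
  assume m: "models I P" and "headgen_step P P'"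
  then obtain C H X t where C: "C \<in> P" and hC: "hd C = subst_hd (Var(X := t)) H"
    and P': "P' = (P - {C}) \<union> {Cl H (Eq (Var X) t # bd C)}" unfolding headgen_step_def by blast
  have vC: "valid I C" using m C by (auto simp: models_valid)
  have "valid I (Cl H (Eq (Var X) t # bd C))" unfolding valid_def
  proof (intro allI impI)
    fix \<sigma> assume g: "ground_subst \<sigma>" and s: "gsat I (subst_goal \<sigma> (bd (Cl H (Eq (Var X) t # bd C))))"
    then have e: "\<sigma> X = subst_tm \<sigma> t" and s2: "gsat I (subst_goal \<sigma> (bd C))" by auto
    have "\<sigma>(X := subst_tm \<sigma> t) = \<sigma>" using e by auto
    then have "subst_hd \<sigma> (hd C) = subst_hd \<sigma> H" using hC by (simp add: subst_hd_comp scomp_upd)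
    then show "subst_hd \<sigma> (hd (Cl H (Eq (Var X) t # bd C))) \<in> I"
      using vC g s2 unfolding valid_def by auto
  qed
  then show ?thesis using m P' by (auto simp: models_valid)
qed

lemma headgen_wp: "headgen_step P P' \<Longrightarrow> wp I w P P'"
proof -
  assume "headgen_step P P'"
  then obtain C H X t where C: "C \<in> P" and X: "X \<in> hvars H" "X \<notin> cvars C" and hC: "hd C = subst_hd (Var(X := t)) H"
    and P': "P' = (P - {C}) \<union> {Cl H (Eq (Var X) t # bd C)}" unfolding headgen_step_def by blast
  have tX: "X \<notin> tvars t"
  proof -
    have "tvars t \<subseteq> hvars (hd C)" using hC X(1) by (force simp: hvars_subst_hd)
    then show ?thesis using X(2) by (auto simp: cvars_def)
  qed
  show ?thesis
  proof (rule wpI)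
    fix D \<sigma> assume "D \<in> P" "D \<notin> P'" and g: "ground_subst \<sigma>" and s: "gsat I (subst_goal \<sigma> (bd D))"
    then have D: "D = C" using P' by auto
    define \<sigma>' where "\<sigma>' = \<sigma>(X := subst_tm \<sigma> t)"
    have g': "ground_subst \<sigma>'" using g by (auto simp: \<sigma>'_def ground_subst_def ground_def ground_subst_tm)
    have t': "subst_tm \<sigma>' t = subst_tm \<sigma> t" using tX by (auto simp: \<sigma>'_def intro: subst_tm_cong)
    have b': "subst_goal \<sigma>' (bd C) = subst_goal \<sigma> (bd C)" using X(2)
      by (auto simp: \<sigma>'_def cvars_def intro!: subst_goal_cong)
    have h': "subst_hd \<sigma>' H = subst_hd \<sigma> (hd C)" using hC by (simp add: subst_hd_comp scomp_upd \<sigma>'_def)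
    show "\<exists>C'\<in>P'. \<exists>\<sigma>'. ground_subst \<sigma>' \<and> subst_hd \<sigma>' (hd C') = subst_hd \<sigma> (hd D) \<and>
        gsat I (subst_goal \<sigma>' (bd C')) \<and> wsum w (subst_goal \<sigma>' (bd C')) \<le> wsum w (subst_goal \<sigma> (bd D))"
      using P' g' t' b' h' s D by (intro bexI[of _ "Cl H (Eq (Var X) t # bd C)"] exI[of _ \<sigma>']) (auto simp: \<sigma>'_def)
  qed
qed

lemma casesplit_sound: "models I P \<Longrightarrow> casesplit_step P P' \<Longrightarrow> models I P'"
proof -
  assume m: "models I P" and "casesplit_step P P'"
  then obtain C X t where C: "C \<in> P"
    and P': "P' = (P - {C}) \<union> {subst_cl (Var(X := t)) C, Cl (hd C) (Neq (Var X) t # bd C)}"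
    unfolding casesplit_step_def by blast
  have vC: "valid I C" using m C by (auto simp: models_valid)
  have "valid I (Cl (hd C) (Neq (Var X) t # bd C))" using vC by (auto simp: valid_def)
  then show ?thesis using m P' valid_inst[OF vC] by (auto simp: models_valid)
qed

lemma casesplit_wp: "casesplit_step P P' \<Longrightarrow> wp I w P P'"
proof -
  assume "casesplit_step P P'"
  then obtain C X t where C: "C \<in> P"
    and P': "P' = (P - {C}) \<union> {subst_cl (Var(X := t)) C, Cl (hd C) (Neq (Var X) t # bd C)}"
    unfolding casesplit_step_def by blast
  show ?thesis
  proof (rule wpI)
    fix D \<sigma> assume "D \<in> P" "D \<notin> P'" and g: "ground_subst \<sigma>" and s: "gsat I (subst_goal \<sigma> (bd D))"
    then have D: "D = C" using P' by auto
    show "\<exists>C'\<in>P'. \<exists>\<sigma>'. ground_subst \<sigma>' \<and> subst_hd \<sigma>' (hd C') = subst_hd \<sigma> (hd D) \<and>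
        gsat I (subst_goal \<sigma>' (bd C')) \<and> wsum w (subst_goal \<sigma>' (bd C')) \<le> wsum w (subst_goal \<sigma> (bd D))"
    proof (cases "\<sigma> X = subst_tm \<sigma> t")
      case True
      then have "scomp \<sigma> (Var(X := t)) = \<sigma>" by (auto simp: scomp_upd)
      then have "subst_cl \<sigma> (subst_cl (Var(X := t)) C) = subst_cl \<sigma> C" by (simp add: subst_cl_comp)
      then show ?thesis using P' g s D
        by (intro bexI[of _ "subst_cl (Var(X := t)) C"] exI[of _ \<sigma>]) (auto simp: subst_cl_def)
    next
      case False
      then show ?thesis using P' g s D
        by (intro bexI[of _ "Cl (hd C) (Neq (Var X) t # bd C)"] exI[of _ \<sigma>]) auto
    qed
  qed
qed

lemma eqelim_sound: "models I P \<Longrightarrow> eqelim_step P P' \<Longrightarrow> models I P'"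
proof -
  assume m: "models I P" and "eqelim_step P P'"
  then obtain C G1 t1 t2 G2 where C: "C \<in> P" and bC: "bd C = G1 @ [Eq t1 t2] @ G2"
    and P': "if unifiable [t1] [t2]
        then (\<exists>\<theta>. is_mgu \<theta> [t1] [t2] \<and> P' = (P - {C}) \<union> {subst_cl \<theta> (Cl (hd C) (G1 @ G2))})
        else P' = P - {C}" unfolding eqelim_step_def by blast
  have vC: "valid I C" using m C by (auto simp: models_valid)
  show ?thesis
  proof (cases "unifiable [t1] [t2]")
    case True
    then obtain \<theta> where mg: "is_mgu \<theta> [t1] [t2]" and P'': "P' = (P - {C}) \<union> {subst_cl \<theta> (Cl (hd C) (G1 @ G2))}"
      using P' by auto
    have u: "subst_tm \<theta> t1 = subst_tm \<theta> t2" using mgu_unifier[OF mg] by simp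
    have "valid I (subst_cl \<theta> (Cl (hd C) (G1 @ G2)))" unfolding valid_def
    proof (intro allI impI)
      fix \<tau> assume g: "ground_subst \<tau>" and s: "gsat I (subst_goal \<tau> (bd (subst_cl \<theta> (Cl (hd C) (G1 @ G2)))))"
      have "subst_tm (scomp \<tau> \<theta>) t1 = subst_tm (scomp \<tau> \<theta>) t2" using u by (metis subst_tm_comp)
      then have "gsat I (subst_goal (scomp \<tau> \<theta>) (bd C))" using s bC by (simp add: subst_goal_comp)
      then have "subst_hd (scomp \<tau> \<theta>) (hd C) \<in> I" using vC ground_comp[OF g] unfolding valid_def by blast
      then show "subst_hd \<tau> (hd (subst_cl \<theta> (Cl (hd C) (G1 @ G2)))) \<in> I" by (simp add: subst_hd_comp)
    qed
    then show ?thesis using m P'' by (auto simp: models_valid)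
  next
    case False then show ?thesis using m P' by (auto simp: models_def)
  qed
qed

lemma eqelim_wp: "eqelim_step P P' \<Longrightarrow> wp I w P P'"
proof -
  assume "eqelim_step P P'"
  then obtain C G1 t1 t2 G2 where C: "C \<in> P" and bC: "bd C = G1 @ [Eq t1 t2] @ G2"
    and P': "if unifiable [t1] [t2]
        then (\<exists>\<theta>. is_mgu \<theta> [t1] [t2] \<and> P' = (P - {C}) \<union> {subst_cl \<theta> (Cl (hd C) (G1 @ G2))})
        else P' = P - {C}" unfolding eqelim_step_def by blast
  show ?thesis
  proof (rule wpI)
    fix D \<sigma> assume "D \<in> P" "D \<notin> P'" and g: "ground_subst \<sigma>" and s: "gsat I (subst_goal \<sigma> (bd D))"
    have D: "D = C" using P' \<open>D \<in> P\<close> \<open>D \<notin> P'\<close> by (auto split: if_splits)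
    have e: "subst_tm \<sigma> t1 = subst_tm \<sigma> t2" using s D bC by simp
    then have "unifiable [t1] [t2]" by (auto simp: unifiable_def unifier_def)
    then obtain \<theta> where mg: "is_mgu \<theta> [t1] [t2]" and P'': "P' = (P - {C}) \<union> {subst_cl \<theta> (Cl (hd C) (G1 @ G2))}"
      using P' by auto
    obtain \<tau> where g\<tau>: "ground_subst \<tau>" and ct: "scomp \<tau> \<theta> = \<sigma>"
      using mgu_factor[OF mg _ g] e by auto
    show "\<exists>C'\<in>P'. \<exists>\<sigma>'. ground_subst \<sigma>' \<and> subst_hd \<sigma>' (hd C') = subst_hd \<sigma> (hd D) \<and>
        gsat I (subst_goal \<sigma>' (bd C')) \<and> wsum w (subst_goal \<sigma>' (bd C')) \<le> wsum w (subst_goal \<sigma> (bd D))"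
      using P'' g\<tau> ct s D bC
      by (intro bexI[of _ "subst_cl \<theta> (Cl (hd C) (G1 @ G2))"] exI[of _ \<tau>])
         (auto simp: subst_hd_comp subst_goal_comp)
  qed
qed


lemma diseq_cases:
  assumes "diseq_step P P'"
  obtains C G1 t1 t2 G2 where "C \<in> P" "bd C = G1 @ [Neq t1 t2] @ G2" "\<not> unifiable [t1] [t2]"
          "P' = (P - {C}) \<union> {Cl (hd C) (G1 @ G2)}"
  | C G1 f ts us G2 where "C \<in> P" "bd C = G1 @ [Neq (Fn f ts) (Fn f us)] @ G2" "length ts = length us"
          "P' = (P - {C}) \<union> {Cl (hd C) (G1 @ [Neq (ts ! i) (us ! i)] @ G2) | i. i < length ts}"
  | C G1 X G2 where "C \<in> P" "bd C = G1 @ [Neq (Var X) (Var X)] @ G2" "P' = P - {C}"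
  | C G1 t X G2 where "C \<in> P" "bd C = G1 @ [Neq t (Var X)] @ G2"
          "P' = (P - {C}) \<union> {Cl (hd C) (G1 @ [Neq (Var X) t] @ G2)}"
  | C G1 X t1 G2 t2 G3 \<rho> where "C \<in> P" "bd C = G1 @ [Neq (Var X) t1] @ G2 @ [Neq (Var X) t2] @ G3"
          "bij_betw \<rho> (local_vars (hd C) G1 [Neq (Var X) t1] (G2 @ [Neq (Var X) t2] @ G3))
                     (local_vars (hd C) (G1 @ [Neq (Var X) t1] @ G2) [Neq (Var X) t2] G3)"
          "subst_tm (\<lambda>x. if x \<in> local_vars (hd C) G1 [Neq (Var X) t1] (G2 @ [Neq (Var X) t2] @ G3)
                         then Var (\<rho> x) else Var x) t1 = t2"
          "P' = (P - {C}) \<union> {Cl (hd C) (G1 @ [Neq (Var X) t1] @ G2 @ G3)}"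
  using assms unfolding diseq_step_def Let_def
  apply (elim bexE disjE exE conjE)
      apply (rule that(1); assumption)
     apply (rule that(2); assumption)
    apply (rule that(3); assumption)
   apply (rule that(4); assumption)
  apply (rule that(5); assumption)
  done

lemma diseq_sound: "models I P \<Longrightarrow> diseq_step P P' \<Longrightarrow> models I P'"
proof -
  assume m: "models I P" and d: "diseq_step P P'"
  have vC: "C \<in> P \<Longrightarrow> valid I C" for C using m by (auto simp: models_valid)
  show ?thesis
  using d proof (cases rule: diseq_cases)
    case (1 C G1 t1 t2 G2)
    have "valid I (Cl (hd C) (G1 @ G2))" unfolding valid_def
    proof (intro allI impI)
      fix \<sigma> assume g: "ground_subst \<sigma>" and s: "gsat I (subst_goal \<sigma> (bd (Cl (hd C) (G1 @ G2))))"
      have "subst_tm \<sigma> t1 \<noteq> subst_tm \<sigma> t2" using 1(3) by (auto simp: unifiable_def unifier_def)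
      then have "gsat I (subst_goal \<sigma> (bd C))" using s 1(2) by simp
      then show "subst_hd \<sigma> (hd (Cl (hd C) (G1 @ G2))) \<in> I" using vC[OF 1(1)] g by (auto simp: valid_def)
    qed
    then show ?thesis using m 1(4) by (auto simp: models_valid)
  next
    case (2 C G1 f ts us G2)
    have "valid I (Cl (hd C) (G1 @ [Neq (ts ! i) (us ! i)] @ G2))" if i: "i < length ts" for i
      unfolding valid_def
    proof (intro allI impI)
      fix \<sigma> assume g: "ground_subst \<sigma>" and s: "gsat I (subst_goal \<sigma> (bd (Cl (hd C) (G1 @ [Neq (ts ! i) (us ! i)] @ G2))))"
      then have "subst_tm \<sigma> (ts ! i) \<noteq> subst_tm \<sigma> (us ! i)" by simp
      then have "map (subst_tm \<sigma>) ts \<noteq> map (subst_tm \<sigma>) us" using i 2(3) by (metis nth_map)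
      then have "gsat I (subst_goal \<sigma> (bd C))" using s 2(2) by simp
      then show "subst_hd \<sigma> (hd (Cl (hd C) (G1 @ [Neq (ts ! i) (us ! i)] @ G2))) \<in> I"
        using vC[OF 2(1)] g by (auto simp: valid_def)
    qed
    then show ?thesis using m 2(4) by (auto simp: models_valid)
  next
    case (3 C G1 X G2)
    then show ?thesis using m 3(3) by (auto simp: models_def)
  next
    case (4 C G1 t X G2)
    have "valid I (Cl (hd C) (G1 @ [Neq (Var X) t] @ G2))"
      using vC[OF 4(1)] 4(2) by (auto simp: valid_def)
    then show ?thesis using m 4(3) by (auto simp: models_valid)
  next
    case (5 C G1 X t1 G2 t2 G3 \<rho>)
    define H where "H = hd C"
    define L1 where "L1 = local_vars H G1 [Neq (Var X) t1] (G2 @ [Neq (Var X) t2] @ G3)"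
    define L2 where "L2 = local_vars H (G1 @ [Neq (Var X) t1] @ G2) [Neq (Var X) t2] G3"
    have bij: "bij_betw \<rho> L1 L2" using 5(3) by (simp add: L1_def L2_def H_def)
    have r: "subst_tm (\<lambda>x. if x \<in> L1 then Var (\<rho> x) else Var x) t1 = t2"
      using 5(4) by (simp add: L1_def H_def)
    have "valid I (Cl H (G1 @ [Neq (Var X) t1] @ G2 @ G3))" unfolding valid_def
    proof (intro allI impI)
      fix \<sigma> assume g: "ground_subst \<sigma>" and s: "gsat I (subst_goal \<sigma> (bd (Cl H (G1 @ [Neq (Var X) t1] @ G2 @ G3))))"
      define \<sigma>' where "\<sigma>' = (\<lambda>y. if y \<in> L2 then \<sigma> (inv_into L1 \<rho> y) else \<sigma> y)"
      have g': "ground_subst \<sigma>'" using g by (auto simp: ground_subst_def \<sigma>'_def)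
      have agree: "\<sigma>' y = \<sigma> y" if "y \<in> hvars H \<union> gvars G1 \<union> avars (Neq (Var X) t1) \<union> gvars G2 \<union> gvars G3" for y
        using that by (auto simp: \<sigma>'_def L2_def local_vars_def)
      have t2: "subst_tm \<sigma>' t2 = subst_tm \<sigma> t1"
      proof -
        have "subst_tm \<sigma>' t2 = subst_tm (scomp \<sigma>' (\<lambda>x. if x \<in> L1 then Var (\<rho> x) else Var x)) t1"
          using r by (metis subst_tm_comp)
        also have "\<dots> = subst_tm \<sigma> t1"
        proof (rule subst_tm_cong)
          fix x assume x: "x \<in> tvars t1"
          show "scomp \<sigma>' (\<lambda>x. if x \<in> L1 then Var (\<rho> x) else Var x) x = \<sigma> x"
          proof (cases "x \<in> L1")
            case True
            then have "\<rho> x \<in> L2" "inv_into L1 \<rho> (\<rho> x) = x" using bij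
              by (auto simp: bij_betw_def inv_into_f_f)
            then show ?thesis using True by (simp add: scomp_def \<sigma>'_def)
          next
            case False
            then show ?thesis using agree[of x] x by (simp add: scomp_def)
          qed
        qed
        finally show ?thesis .
      qed
      have X: "\<sigma>' X = \<sigma> X" using agree by simp
      have sub: "subst_goal \<sigma>' G = subst_goal \<sigma> G" if "gvars G \<subseteq> gvars G1 \<union> gvars G2 \<union> gvars G3" for G
        using that agree by (intro subst_goal_cong) auto
      have s1: "subst_goal \<sigma>' G1 = subst_goal \<sigma> G1" "subst_goal \<sigma>' G2 = subst_goal \<sigma> G2"
        "subst_goal \<sigma>' G3 = subst_goal \<sigma> G3" by (rule sub; auto)+
      have t1: "subst_tm \<sigma>' t1 = subst_tm \<sigma> t1" using agree by (intro subst_tm_cong) auto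
      have "gsat I (subst_goal \<sigma>' (bd C))"
        using s 5(2) t2 X s1 t1 by simp
      then have "subst_hd \<sigma>' (hd C) \<in> I" using vC[OF 5(1)] g' by (auto simp: valid_def)
      moreover have "subst_hd \<sigma>' H = subst_hd \<sigma> H" using agree by (intro subst_hd_cong) auto
      ultimately show "subst_hd \<sigma> (hd (Cl H (G1 @ [Neq (Var X) t1] @ G2 @ G3))) \<in> I" by (simp add: H_def)
    qed
    moreover have "P' = (P - {C}) \<union> {Cl H (G1 @ [Neq (Var X) t1] @ G2 @ G3)}" using 5(5) by (simp only: H_def)
    ultimately show ?thesis using m unfolding models_valid by blast
  qed
qed

lemma diseq_wp: "diseq_step P P' \<Longrightarrow> wp I w P P'"
proof -
  assume d: "diseq_step P P'"
  show ?thesis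
  using d proof (cases rule: diseq_cases)
    case (1 C G1 t1 t2 G2)
    show ?thesis
    proof (rule wpI)
      fix D \<sigma> assume "D \<in> P" "D \<notin> P'" and g: "ground_subst \<sigma>" and s: "gsat I (subst_goal \<sigma> (bd D))"
      then have D: "D = C" using 1 by auto
      show "\<exists>C'\<in>P'. \<exists>\<sigma>'. ground_subst \<sigma>' \<and> subst_hd \<sigma>' (hd C') = subst_hd \<sigma> (hd D) \<and>
        gsat I (subst_goal \<sigma>' (bd C')) \<and> wsum w (subst_goal \<sigma>' (bd C')) \<le> wsum w (subst_goal \<sigma> (bd D))"
        using 1 g s D by (intro bexI[of _ "Cl (hd C) (G1 @ G2)"] exI[of _ \<sigma>]) auto
    qed
  next
    case (2 C G1 f ts us G2)
    show ?thesis
    proof (rule wpI)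
      fix D \<sigma> assume "D \<in> P" "D \<notin> P'" and g: "ground_subst \<sigma>" and s: "gsat I (subst_goal \<sigma> (bd D))"
      then have D: "D = C" using 2 by auto
      have "map (subst_tm \<sigma>) ts \<noteq> map (subst_tm \<sigma>) us" using s D 2(2) by simp
      then obtain i where i: "i < length ts" "subst_tm \<sigma> (ts ! i) \<noteq> subst_tm \<sigma> (us ! i)"
        using 2(3) by (metis list_eq_iff_nth_eq length_map nth_map)
      show "\<exists>C'\<in>P'. \<exists>\<sigma>'. ground_subst \<sigma>' \<and> subst_hd \<sigma>' (hd C') = subst_hd \<sigma> (hd D) \<and>
        gsat I (subst_goal \<sigma>' (bd C')) \<and> wsum w (subst_goal \<sigma>' (bd C')) \<le> wsum w (subst_goal \<sigma> (bd D))"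
        using 2 g s D i by (intro bexI[of _ "Cl (hd C) (G1 @ [Neq (ts ! i) (us ! i)] @ G2)"] exI[of _ \<sigma>]) auto
    qed
  next
    case (3 C G1 X G2)
    show ?thesis
    proof (rule wpI)
      fix D \<sigma> assume "D \<in> P" "D \<notin> P'" and g: "ground_subst \<sigma>" and s: "gsat I (subst_goal \<sigma> (bd D))"
      then have D: "D = C" using 3 by auto
      then show "\<exists>C'\<in>P'. \<exists>\<sigma>'. ground_subst \<sigma>' \<and> subst_hd \<sigma>' (hd C') = subst_hd \<sigma> (hd D) \<and>
        gsat I (subst_goal \<sigma>' (bd C')) \<and> wsum w (subst_goal \<sigma>' (bd C')) \<le> wsum w (subst_goal \<sigma> (bd D))"
        using s 3 by auto
    qed
  next
    case (4 C G1 t X G2)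
    show ?thesis
    proof (rule wpI)
      fix D \<sigma> assume "D \<in> P" "D \<notin> P'" and g: "ground_subst \<sigma>" and s: "gsat I (subst_goal \<sigma> (bd D))"
      then have D: "D = C" using 4 by auto
      show "\<exists>C'\<in>P'. \<exists>\<sigma>'. ground_subst \<sigma>' \<and> subst_hd \<sigma>' (hd C') = subst_hd \<sigma> (hd D) \<and>
        gsat I (subst_goal \<sigma>' (bd C')) \<and> wsum w (subst_goal \<sigma>' (bd C')) \<le> wsum w (subst_goal \<sigma> (bd D))"
        using 4 g s D by (intro bexI[of _ "Cl (hd C) (G1 @ [Neq (Var X) t] @ G2)"] exI[of _ \<sigma>]) auto
    qed
  next
    case (5 C G1 X t1 G2 t2 G3 \<rho>)
    show ?thesis
    proof (rule wpI)
      fix D \<sigma> assume "D \<in> P" "D \<notin> P'" and g: "ground_subst \<sigma>" and s: "gsat I (subst_goal \<sigma> (bd D))"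
      then have D: "D = C" using 5 by auto
      show "\<exists>C'\<in>P'. \<exists>\<sigma>'. ground_subst \<sigma>' \<and> subst_hd \<sigma>' (hd C') = subst_hd \<sigma> (hd D) \<and>
        gsat I (subst_goal \<sigma>' (bd C')) \<and> wsum w (subst_goal \<sigma>' (bd C')) \<le> wsum w (subst_goal \<sigma> (bd D))"
        using 5 g s D by (intro bexI[of _ "Cl (hd C) (G1 @ [Neq (Var X) t1] @ G2 @ G3)"] exI[of _ \<sigma>]) auto
    qed
  qed
qed


lemma fold_cases:
  assumes "fold_step Defs P newp P'" and "Ds = {D\<in>Defs. hpred (hd D) = newp}"
  obtains H G1 G2 \<theta> Cf \<rho> where
    "Ds \<noteq> {}"
    "\<forall>D\<in>Ds. Cf D \<in> P \<and> inj (\<rho> D) \<and>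
           subst_cl (ren (\<rho> D)) (Cf D) = Cl H (G1 @ subst_goal \<theta> (bd D) @ G2)"
    "\<forall>D\<in>Ds. \<forall>X\<in>gvars (bd D). X \<notin> hvars (hd D) \<longrightarrow>
           (\<exists>Z. \<theta> X = Var Z \<and> Z \<notin> hvars H \<union> gvars G1 \<union> gvars G2 \<and>
                (\<forall>Y\<in>gvars (bd D). Y \<noteq> X \<longrightarrow> Z \<notin> tvars (\<theta> Y)))"
    "\<forall>D\<in>Ds. P' = (P - Cf ` Ds) \<union>
        {Cl H (G1 @ [Rel (fst newp) (map (subst_tm \<theta>) (snd (hd D)))] @ G2)}"
proof -
  have "let Ds = {D\<in>Defs. hpred (hd D) = newp} in
     Ds \<noteq> {} \<and>
     (\<exists>H G1 G2 \<theta> Cf \<rho>.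
        (\<forall>D\<in>Ds. Cf D \<in> P \<and> inj (\<rho> D) \<and>
           subst_cl (ren (\<rho> D)) (Cf D) = Cl H (G1 @ subst_goal \<theta> (bd D) @ G2)) \<and>
        (\<forall>D\<in>Ds. \<forall>X\<in>gvars (bd D). X \<notin> hvars (hd D) \<longrightarrow>
           (\<exists>Z. \<theta> X = Var Z \<and> Z \<notin> hvars H \<union> gvars G1 \<union> gvars G2 \<and>
                (\<forall>Y\<in>gvars (bd D). Y \<noteq> X \<longrightarrow> Z \<notin> tvars (\<theta> Y)))) \<and>
        (\<forall>D\<in>Ds. P' = (P - Cf ` Ds) \<union> {Cl H (G1 @ [Rel (fst newp) (map (subst_tm \<theta>) (snd (hd D)))] @ G2)}))"
    using assms(1) unfolding fold_step_def .
  then have "Ds \<noteq> {} \<and>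
     (\<exists>H G1 G2 \<theta> Cf \<rho>.
        (\<forall>D\<in>Ds. Cf D \<in> P \<and> inj (\<rho> D) \<and>
           subst_cl (ren (\<rho> D)) (Cf D) = Cl H (G1 @ subst_goal \<theta> (bd D) @ G2)) \<and>
        (\<forall>D\<in>Ds. \<forall>X\<in>gvars (bd D). X \<notin> hvars (hd D) \<longrightarrow>
           (\<exists>Z. \<theta> X = Var Z \<and> Z \<notin> hvars H \<union> gvars G1 \<union> gvars G2 \<and>
                (\<forall>Y\<in>gvars (bd D). Y \<noteq> X \<longrightarrow> Z \<notin> tvars (\<theta> Y)))) \<and>
        (\<forall>D\<in>Ds. P' = (P - Cf ` Ds) \<union> {Cl H (G1 @ [Rel (fst newp) (map (subst_tm \<theta>) (snd (hd D)))] @ G2)}))"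
    unfolding Let_def assms(2) .
  then show ?thesis
    apply (elim exE conjE)
    apply (rule that)
       apply assumption+
    done
qed

lemma wsum_Cons: "wsum w (a # G) = wsum w [a] + wsum w G"
  by (cases a) auto

definition unren :: "(nat \<Rightarrow> nat) \<Rightarrow> subst \<Rightarrow> subst" where
  "unren \<rho> \<sigma> = (\<lambda>y. if y \<in> range \<rho> then \<sigma> (inv \<rho> y) else Fn 0 [])"

lemma unren_ground: "ground_subst \<sigma> \<Longrightarrow> ground_subst (unren \<rho> \<sigma>)"
  by (auto simp: ground_subst_def unren_def ground_def)

lemma unren_scomp: "inj \<rho> \<Longrightarrow> scomp (unren \<rho> \<sigma>) (ren \<rho>) = \<sigma>"
  by (auto simp: scomp_def unren_def ren_def)

lemma unren_cl: "inj \<rho> \<Longrightarrow> subst_cl (unren \<rho> \<sigma>) (subst_cl (ren \<rho>) C) = subst_cl \<sigma> C"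
  by (simp add: subst_cl_comp unren_scomp)

lemma fold_wp:
  assumes f: "fold_step Defs P newp P'"
    and HD: "\<forall>D\<in>Defs. \<forall>\<tau>. ground_subst \<tau> \<longrightarrow> gsat I (subst_goal \<tau> (bd D)) \<longrightarrow>
               subst_hd \<tau> (hd D) \<in> I \<and> w (subst_hd \<tau> (hd D)) \<le> wsum w (subst_goal \<tau> (bd D))"
  shows "wp I w P P'"
proof -
  define Ds where "Ds = {D\<in>Defs. hpred (hd D) = newp}"
  obtain H G1 G2 \<theta> Cf \<rho> where ne: "Ds \<noteq> {}"
    and cf: "\<forall>D\<in>Ds. Cf D \<in> P \<and> inj (\<rho> D) \<and>
           subst_cl (ren (\<rho> D)) (Cf D) = Cl H (G1 @ subst_goal \<theta> (bd D) @ G2)"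
    and P': "\<forall>D\<in>Ds. P' = (P - Cf ` Ds) \<union> {Cl H (G1 @ [Rel (fst newp) (map (subst_tm \<theta>) (snd (hd D)))] @ G2)}"
    by (rule fold_cases[OF f Ds_def])
  show ?thesis
  proof (rule wpI)
    fix C \<sigma> assume C: "C \<in> P" "C \<notin> P'" and g: "ground_subst \<sigma>" and s: "gsat I (subst_goal \<sigma> (bd C))"
    obtain D0 where D0: "D0 \<in> Ds" using ne by blast
    have P'0: "P' = (P - Cf ` Ds) \<union> {Cl H (G1 @ [Rel (fst newp) (map (subst_tm \<theta>) (snd (hd D0)))] @ G2)}"
      using P' D0 by (rule bspec)
    have "C \<in> Cf ` Ds" using C P'0 by auto
    then obtain D where D: "D \<in> Ds" and CD: "C = Cf D" by blast
    have D': "D \<in> Defs" "hpred (hd D) = newp" using D by (auto simp: Ds_def)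
    define \<sigma>r where "\<sigma>r = unren (\<rho> D) \<sigma>"
    have gr: "ground_subst \<sigma>r" using g unren_ground \<sigma>r_def by auto
    have inst: "subst_cl \<sigma>r (Cl H (G1 @ subst_goal \<theta> (bd D) @ G2)) = subst_cl \<sigma> C"
    proof -
      have "subst_cl (ren (\<rho> D)) C = Cl H (G1 @ subst_goal \<theta> (bd D) @ G2)" "inj (\<rho> D)"
        using cf D CD by auto
      then show ?thesis using unren_cl[of "\<rho> D" \<sigma> C] \<sigma>r_def by simp
    qed
    have hH: "subst_hd \<sigma>r H = subst_hd \<sigma> (hd C)"
      using arg_cong[OF inst, of hd] by simp
    have bC: "subst_goal \<sigma> (bd C) = subst_goal \<sigma>r G1 @ subst_goal (scomp \<sigma>r \<theta>) (bd D) @ subst_goal \<sigma>r G2"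
      using arg_cong[OF inst, of bd] by (simp add: subst_goal_comp)
    define \<tau> where "\<tau> = scomp \<sigma>r \<theta>"
    have g\<tau>: "ground_subst \<tau>" using gr ground_comp \<tau>_def by auto
    have sD: "gsat I (subst_goal \<tau> (bd D))" using s bC \<tau>_def by simp
    have fn: "fst (hd D) = fst newp" using D'(2) by (auto simp: hpred_def)
    define N where "N = Rel (fst newp) (map (subst_tm \<sigma>r) (map (subst_tm \<theta>) (snd (hd D))))"
    have NN: "(fst newp, map (subst_tm \<sigma>r) (map (subst_tm \<theta>) (snd (hd D)))) = subst_hd \<tau> (hd D)"
      using fn by (simp add: subst_hd_def \<tau>_def map_subst_comp)
    have "subst_hd \<tau> (hd D) \<in> I \<and> w (subst_hd \<tau> (hd D)) \<le> wsum w (subst_goal \<tau> (bd D))"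
      using HD D'(1) g\<tau> sD by blast
    then have "(fst newp, map (subst_tm \<sigma>r) (map (subst_tm \<theta>) (snd (hd D)))) \<in> I \<and>
       w (fst newp, map (subst_tm \<sigma>r) (map (subst_tm \<theta>) (snd (hd D)))) \<le> wsum w (subst_goal \<tau> (bd D))"
      by (simp only: NN)
    then have hN: "hsat I N" and wN: "wsum w [N] \<le> wsum w (subst_goal \<tau> (bd D))"
      unfolding N_def by simp_all
    define E where "E = Cl H (G1 @ [Rel (fst newp) (map (subst_tm \<theta>) (snd (hd D)))] @ G2)"
    have EP: "E \<in> P'" using bspec[OF P' D] E_def by simp
    have bE: "subst_goal \<sigma>r (bd E) = subst_goal \<sigma>r G1 @ [N] @ subst_goal \<sigma>r G2"
      by (simp add: E_def N_def)
    show "\<exists>C'\<in>P'. \<exists>\<sigma>'. ground_subst \<sigma>' \<and> subst_hd \<sigma>' (hd C') = subst_hd \<sigma> (hd C) \<and>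
        gsat I (subst_goal \<sigma>' (bd C')) \<and> wsum w (subst_goal \<sigma>' (bd C')) \<le> wsum w (subst_goal \<sigma> (bd C))"
    proof (rule bexI[OF _ EP], rule exI[of _ \<sigma>r], intro conjI gr)
      show "subst_hd \<sigma>r (hd E) = subst_hd \<sigma> (hd C)" using hH by (simp add: E_def)
      show "gsat I (subst_goal \<sigma>r (bd E))" using bE s bC hN by simp
      show "wsum w (subst_goal \<sigma>r (bd E)) \<le> wsum w (subst_goal \<sigma> (bd C))"
        using bE bC wN \<tau>_def by (simp add: wsum_Cons[of w N "subst_goal \<sigma>r G2"])
    qed
  qed
qed


lemma fold_sound:
  assumes f: "fold_step Defs P newp P'" and m: "models I P"
    and supp: "\<forall>N\<in>I. hpred N = newp \<longrightarrow> (\<exists>D\<in>Defs. hpred (hd D) = newp \<and>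
                 (\<exists>\<tau>. ground_subst \<tau> \<and> subst_hd \<tau> (hd D) = N \<and> gsat I (subst_goal \<tau> (bd D))))"
    and sameh: "\<forall>D1\<in>Defs. \<forall>D2\<in>Defs. hpred (hd D1) = newp \<longrightarrow> hpred (hd D2) = newp \<longrightarrow> hd D1 = hd D2"
  shows "models I P'"
proof -
  define Ds where "Ds = {D\<in>Defs. hpred (hd D) = newp}"
  obtain H G1 G2 \<theta> Cf \<rho> where ne: "Ds \<noteq> {}"
    and cf: "\<forall>D\<in>Ds. Cf D \<in> P \<and> inj (\<rho> D) \<and>
           subst_cl (ren (\<rho> D)) (Cf D) = Cl H (G1 @ subst_goal \<theta> (bd D) @ G2)"
    and loc: "\<forall>D\<in>Ds. \<forall>X\<in>gvars (bd D). X \<notin> hvars (hd D) \<longrightarrow>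
           (\<exists>Z. \<theta> X = Var Z \<and> Z \<notin> hvars H \<union> gvars G1 \<union> gvars G2 \<and>
                (\<forall>Y\<in>gvars (bd D). Y \<noteq> X \<longrightarrow> Z \<notin> tvars (\<theta> Y)))"
    and P': "\<forall>D\<in>Ds. P' = (P - Cf ` Ds) \<union> {Cl H (G1 @ [Rel (fst newp) (map (subst_tm \<theta>) (snd (hd D)))] @ G2)}"
    by (rule fold_cases[OF f Ds_def])
  obtain D0 where D0: "D0 \<in> Ds" using ne by blast
  define E where "E = Cl H (G1 @ [Rel (fst newp) (map (subst_tm \<theta>) (snd (hd D0)))] @ G2)"
  have P'0: "P' = (P - Cf ` Ds) \<union> {E}" using bspec[OF P' D0] E_def by simp
  have vE: "valid I E" unfolding valid_def
  proof (intro allI impI)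
    fix \<sigma> assume g: "ground_subst \<sigma>" and s: "gsat I (subst_goal \<sigma> (bd E))"
    define N0 where "N0 = (fst newp, map (subst_tm \<sigma>) (map (subst_tm \<theta>) (snd (hd D0))))"
    have s1: "gsat I (subst_goal \<sigma> G1)" "gsat I (subst_goal \<sigma> G2)" and hN0: "N0 \<in> I"
      using s by (auto simp: E_def N0_def)
    have D0': "D0 \<in> Defs" "hpred (hd D0) = newp" using D0 by (auto simp: Ds_def)
    have "hpred N0 = newp" using D0'(2) by (cases newp) (auto simp: N0_def hpred_def)
    then obtain D1 \<tau> where D1: "D1 \<in> Defs" "hpred (hd D1) = newp" and g\<tau>: "ground_subst \<tau>"
      and hD1: "subst_hd \<tau> (hd D1) = N0" and sD1: "gsat I (subst_goal \<tau> (bd D1))"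
      using supp hN0 by blast
    have D1s: "D1 \<in> Ds" using D1 by (auto simp: Ds_def)
    have h10: "hd D1 = hd D0" using sameh D1 D0' by blast
    have agreeH: "\<tau> Y = subst_tm \<sigma> (\<theta> Y)" if Y: "Y \<in> hvars (hd D1)" for Y
    proof -
      have "map (subst_tm \<tau>) (snd (hd D1)) = map (subst_tm (scomp \<sigma> \<theta>)) (snd (hd D1))"
        using hD1 h10 by (simp add: N0_def subst_hd_def map_subst_comp)
      moreover obtain t where "t \<in> set (snd (hd D1))" "Y \<in> tvars t" using Y by (auto simp: hvars_def tsvars_def)
      ultimately have "\<tau> Y = scomp \<sigma> \<theta> Y" by (metis subst_eq_agree map_eq_conv)
      then show ?thesis by (simp add: scomp_def)
    qed
    define L where "L = {X \<in> gvars (bd D1). X \<notin> hvars (hd D1)}"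
    have loc1: "\<exists>Z. \<theta> X = Var Z \<and> Z \<notin> hvars H \<union> gvars G1 \<union> gvars G2 \<and>
                (\<forall>Y\<in>gvars (bd D1). Y \<noteq> X \<longrightarrow> Z \<notin> tvars (\<theta> Y))" if "X \<in> L" for X
      using loc D1s that by (auto simp: L_def)
    define \<sigma>2 where "\<sigma>2 = (\<lambda>z. if \<exists>X\<in>L. \<theta> X = Var z then \<tau> (SOME X. X \<in> L \<and> \<theta> X = Var z) else \<sigma> z)"
    have g2: "ground_subst \<sigma>2" using g g\<tau> by (auto simp: ground_subst_def \<sigma>2_def)
    have a: "\<sigma>2 z = \<sigma> z" if z: "z \<in> hvars H \<union> gvars G1 \<union> gvars G2" for z
    proof -
      have "\<not> (\<exists>X\<in>L. \<theta> X = Var z)"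
      proof
        assume "\<exists>X\<in>L. \<theta> X = Var z"
        then obtain X where "X \<in> L" "\<theta> X = Var z" by blast
        then show False using loc1[of X] z by auto
      qed
      then show ?thesis by (simp add: \<sigma>2_def)
    qed
    have b: "subst_tm \<sigma>2 (\<theta> Y) = \<tau> Y" if Y: "Y \<in> gvars (bd D1)" for Y
    proof (cases "Y \<in> L")
      case True
      obtain Z where Z: "\<theta> Y = Var Z" "\<forall>Y'\<in>gvars (bd D1). Y' \<noteq> Y \<longrightarrow> Z \<notin> tvars (\<theta> Y')"
        using loc1[OF True] by blast
      have ex: "\<exists>X\<in>L. \<theta> X = Var Z" using True Z by blast
      define X0 where "X0 = (SOME X. X \<in> L \<and> \<theta> X = Var Z)"
      have X0: "X0 \<in> L" "\<theta> X0 = Var Z" using someI_ex[of "\<lambda>X. X \<in> L \<and> \<theta> X = Var Z"] ex X0_def by auto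
      have "X0 = Y"
      proof (rule ccontr)
        assume ne: "X0 \<noteq> Y"
        obtain Z0 where "\<theta> X0 = Var Z0" "\<forall>Y'\<in>gvars (bd D1). Y' \<noteq> X0 \<longrightarrow> Z0 \<notin> tvars (\<theta> Y')"
          using loc1[OF X0(1)] by blast
        then show False using X0(2) Z(1) ne Y by auto
      qed
      then show ?thesis using Z(1) ex X0_def by (simp add: \<sigma>2_def)
    next
      case False
      then have Yh: "Y \<in> hvars (hd D1)" using Y by (auto simp: L_def)
      have "subst_tm \<sigma>2 (\<theta> Y) = subst_tm \<sigma> (\<theta> Y)"
      proof (rule subst_tm_cong)
        fix z assume z: "z \<in> tvars (\<theta> Y)"
        have "\<not> (\<exists>X\<in>L. \<theta> X = Var z)"
        proof
          assume "\<exists>X\<in>L. \<theta> X = Var z"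
          then obtain X where X: "X \<in> L" "\<theta> X = Var z" by blast
          obtain Z0 where "\<theta> X = Var Z0" "\<forall>Y'\<in>gvars (bd D1). Y' \<noteq> X \<longrightarrow> Z0 \<notin> tvars (\<theta> Y')"
            using loc1[OF X(1)] by blast
          then show False using X False Y z by auto
        qed
        then show "\<sigma>2 z = \<sigma> z" by (simp add: \<sigma>2_def)
      qed
      then show ?thesis using agreeH[OF Yh] by simp
    qed
    have mid: "subst_goal \<sigma>2 (subst_goal \<theta> (bd D1)) = subst_goal \<tau> (bd D1)"
      unfolding subst_goal_comp by (rule subst_goal_cong) (simp add: scomp_def b)
    have e1: "subst_goal \<sigma>2 G1 = subst_goal \<sigma> G1" "subst_goal \<sigma>2 G2 = subst_goal \<sigma> G2"
      by (rule subst_goal_cong; simp add: a)+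
    have eH: "subst_hd \<sigma>2 H = subst_hd \<sigma> H" by (rule subst_hd_cong) (simp add: a)
    have cf1: "Cf D1 \<in> P" "subst_cl (ren (\<rho> D1)) (Cf D1) = Cl H (G1 @ subst_goal \<theta> (bd D1) @ G2)"
      using cf D1s by auto
    have vR: "valid I (Cl H (G1 @ subst_goal \<theta> (bd D1) @ G2))"
      using valid_inst[of I "Cf D1" "ren (\<rho> D1)"] m cf1 by (auto simp: models_valid)
    have "gsat I (subst_goal \<sigma>2 (G1 @ subst_goal \<theta> (bd D1) @ G2))"
      using s1 e1 mid sD1 by simp
    then have "subst_hd \<sigma>2 H \<in> I" using vR g2 unfolding valid_def by auto
    then show "subst_hd \<sigma> (hd E) \<in> I" using eH by (simp add: E_def)
  qed
  show ?thesis using m vE P'0 by (auto simp: models_valid)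
qed


lemma unfold_cases:
  assumes "unfold_step P C P'"
  obtains G1 A G2 \<rho> \<sigma> where "C \<in> P" "bd C = G1 @ [A] @ G2" "is_nonbasic A"
    "\<forall>D\<in>P. inj (\<rho> D) \<and> cvars (subst_cl (ren (\<rho> D)) D) \<inter> cvars C = {}"
    "\<forall>D\<in>P. hunifiable A (hd (subst_cl (ren (\<rho> D)) D)) \<longrightarrow>
                 is_hmgu (\<sigma> D) A (hd (subst_cl (ren (\<rho> D)) D))"
    "P' = (P - {C}) \<union>
             {subst_cl (\<sigma> D) (Cl (hd C) (G1 @ bd (subst_cl (ren (\<rho> D)) D) @ G2)) | D.
                D \<in> P \<and> hunifiable A (hd (subst_cl (ren (\<rho> D)) D))}"
  using assms unfolding unfold_step_def
  apply (elim exE conjE)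
  apply (rule that)
       apply assumption+
  done

lemma unfold_deriv:
  assumes u: "unfold_step P C P'" and g: "ground_subst \<sigma>" and s: "gsat I (subst_goal \<sigma> (bd C))"
    and W: "\<forall>p ts. Rel p ts \<in> set (bd C) \<longrightarrow> (\<exists>Cq\<in>P. \<exists>\<sigma>q. ground_subst \<sigma>q \<and>
              subst_hd \<sigma>q (hd Cq) = (p, map (subst_tm \<sigma>) ts) \<and> gsat I (subst_goal \<sigma>q (bd Cq)) \<and>
              wsum w (subst_goal \<sigma>q (bd Cq)) + d \<le> w (p, map (subst_tm \<sigma>) ts))"
  shows "\<exists>C'\<in>P'. \<exists>\<sigma>'. ground_subst \<sigma>' \<and> subst_hd \<sigma>' (hd C') = subst_hd \<sigma> (hd C) \<and>
        gsat I (subst_goal \<sigma>' (bd C')) \<and> wsum w (subst_goal \<sigma>' (bd C')) + d \<le> wsum w (subst_goal \<sigma> (bd C))"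
proof -
  obtain G1 A G2 \<rho> \<mu> where C: "C \<in> P" and bC: "bd C = G1 @ [A] @ G2" and nb: "is_nonbasic A"
    and ren: "\<forall>D\<in>P. inj (\<rho> D) \<and> cvars (subst_cl (ren (\<rho> D)) D) \<inter> cvars C = {}"
    and mg: "\<forall>D\<in>P. hunifiable A (hd (subst_cl (ren (\<rho> D)) D)) \<longrightarrow>
                 is_hmgu (\<mu> D) A (hd (subst_cl (ren (\<rho> D)) D))"
    and P': "P' = (P - {C}) \<union>
             {subst_cl (\<mu> D) (Cl (hd C) (G1 @ bd (subst_cl (ren (\<rho> D)) D) @ G2)) | D.
                D \<in> P \<and> hunifiable A (hd (subst_cl (ren (\<rho> D)) D))}"
    by (rule unfold_cases[OF u])
  obtain q us where A: "A = Rel q us" using nb by (auto simp: is_nonbasic_def)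
  obtain Cq \<sigma>q where Cq: "Cq \<in> P" and gq: "ground_subst \<sigma>q"
    and hq: "subst_hd \<sigma>q (hd Cq) = (q, map (subst_tm \<sigma>) us)" and sq: "gsat I (subst_goal \<sigma>q (bd Cq))"
    and wq: "wsum w (subst_goal \<sigma>q (bd Cq)) + d \<le> w (q, map (subst_tm \<sigma>) us)"
  proof -
    have "Rel q us \<in> set (bd C)" using bC A by simp
    from W[rule_format, OF this] show ?thesis using that by blast
  qed
  define R where "R = subst_cl (ren (\<rho> Cq)) Cq"
  have inj: "inj (\<rho> Cq)" and disj: "cvars R \<inter> cvars C = {}" using ren Cq R_def by auto
  define \<sigma>r where "\<sigma>r = unren (\<rho> Cq) \<sigma>q"
  have Rinst: "subst_cl \<sigma>r R = subst_cl \<sigma>q Cq" using unren_cl[OF inj] R_def \<sigma>r_def by simp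
  define \<gamma> where "\<gamma> = (\<lambda>y. if y \<in> cvars R then \<sigma>r y else \<sigma> y)"
  have g\<gamma>: "ground_subst \<gamma>" using g gq unren_ground[OF gq] by (auto simp: ground_subst_def \<gamma>_def \<sigma>r_def)
  have \<gamma>R: "subst_cl \<gamma> R = subst_cl \<sigma>r R" by (rule subst_cl_cong) (simp add: \<gamma>_def)
  have \<gamma>C: "subst_cl \<gamma> C = subst_cl \<sigma> C" by (rule subst_cl_cong) (use disj in \<open>auto simp: \<gamma>_def\<close>)
  have hR: "subst_hd \<gamma> (hd R) = (q, map (subst_tm \<sigma>) us)"
    using arg_cong[OF \<gamma>R, of hd] arg_cong[OF Rinst, of hd] hq by simp
  have bR: "subst_goal \<gamma> (bd R) = subst_goal \<sigma>q (bd Cq)"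
    using arg_cong[OF \<gamma>R, of bd] arg_cong[OF Rinst, of bd] by simp
  have hCg: "subst_hd \<gamma> (hd C) = subst_hd \<sigma> (hd C)" and bCg: "subst_goal \<gamma> (bd C) = subst_goal \<sigma> (bd C)"
    using arg_cong[OF \<gamma>C, of hd] arg_cong[OF \<gamma>C, of bd] by simp_all
  have qR: "fst (hd R) = q" using hR by (simp add: subst_hd_def)
  have agreeC: "\<gamma> y = \<sigma> y" if "y \<in> cvars C" for y using disj that by (auto simp: \<gamma>_def)
  have mus: "map (subst_tm \<gamma>) us = map (subst_tm \<sigma>) us"
    by (rule tsvars_cong, rule agreeC) (use bC A in \<open>auto simp: cvars_def\<close>)
  have gg1: "subst_goal \<gamma> G1 = subst_goal \<sigma> G1" "subst_goal \<gamma> G2 = subst_goal \<sigma> G2"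
    by (rule subst_goal_cong, rule agreeC, use bC in \<open>auto simp: cvars_def\<close>)+
  have un: "map (subst_tm \<gamma>) us = map (subst_tm \<gamma>) (snd (hd R))"
    using mus hR by (simp add: subst_hd_def)
  have hu: "hunifiable A (hd (subst_cl (ren (\<rho> Cq)) Cq))"
    using A qR un R_def by (auto simp: hunifiable_def unifiable_def unifier_def)
  then have "is_hmgu (\<mu> Cq) A (hd R)" using mg Cq R_def by auto
  then have mgu: "is_mgu (\<mu> Cq) us (snd (hd R))" using A by (auto simp: is_hmgu_def)
  obtain \<tau> where g\<tau>: "ground_subst \<tau>" and ct: "scomp \<tau> (\<mu> Cq) = \<gamma>"
    using mgu_factor[OF mgu un g\<gamma>] by blast
  define C' where "C' = subst_cl (\<mu> Cq) (Cl (hd C) (G1 @ bd R @ G2))"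
  have C'P: "C' \<in> P'" using P' Cq hu C'_def R_def by blast
  have hC': "subst_hd \<tau> (hd C') = subst_hd \<sigma> (hd C)"
    using hCg ct by (simp add: C'_def subst_hd_comp)
  have bC': "subst_goal \<tau> (bd C') = subst_goal \<gamma> G1 @ subst_goal \<sigma>q (bd Cq) @ subst_goal \<gamma> G2"
    using ct bR by (simp add: C'_def subst_goal_comp)
  have bC2: "subst_goal \<sigma> (bd C) = subst_goal \<gamma> G1 @ [Rel q (map (subst_tm \<sigma>) us)] @ subst_goal \<gamma> G2"
    using gg1 bC A by simp
  have "gsat I (subst_goal \<tau> (bd C'))" using bC' bC2 s sq by simp
  moreover have "wsum w (subst_goal \<tau> (bd C')) + d \<le> wsum w (subst_goal \<sigma> (bd C))"
    using bC' bC2 wq by simp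
  ultimately show ?thesis using C'P g\<tau> hC' by blast
qed


definition bpreds :: "program \<Rightarrow> pred set" where
  "bpreds P = (\<Union>C\<in>P. gpreds (bd C))"

lemma bpredsI: "(\<And>C'. C' \<in> P' \<Longrightarrow> C' \<notin> P \<Longrightarrow> gpreds (bd C') \<subseteq> bpreds P) \<Longrightarrow> bpreds P' \<subseteq> bpreds P"
  unfolding bpreds_def by blast

lemma in_bpreds: "C \<in> P \<Longrightarrow> gpreds (bd C) \<subseteq> bpreds P"
  unfolding bpreds_def by blast

lemma unfold_bpreds: "unfold_step P C P' \<Longrightarrow> bpreds P' \<subseteq> bpreds P"
proof (rule bpredsI)
  fix C' assume u: "unfold_step P C P'" and C': "C' \<in> P'" "C' \<notin> P"
  obtain G1 A G2 \<rho> \<mu> where C: "C \<in> P" and bC: "bd C = G1 @ [A] @ G2"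
    and P': "P' = (P - {C}) \<union>
             {subst_cl (\<mu> D) (Cl (hd C) (G1 @ bd (subst_cl (ren (\<rho> D)) D) @ G2)) | D.
                D \<in> P \<and> hunifiable A (hd (subst_cl (ren (\<rho> D)) D))}"
    by (rule unfold_cases[OF u])
  obtain D where D: "D \<in> P" and C'D: "C' = subst_cl (\<mu> D) (Cl (hd C) (G1 @ bd (subst_cl (ren (\<rho> D)) D) @ G2))"
    using C' P' by blast
  have "gpreds (bd C') = gpreds G1 \<union> gpreds (bd D) \<union> gpreds G2" using C'D by (simp add: Un_assoc)
  also have "\<dots> \<subseteq> gpreds (bd C) \<union> gpreds (bd D)" using bC by auto
  also have "\<dots> \<subseteq> bpreds P" using in_bpreds[OF C] in_bpreds[OF D] by blast
  finally show "gpreds (bd C') \<subseteq> bpreds P" .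
qed

lemma subsume_bpreds: "subsume_step P P' \<Longrightarrow> bpreds P' \<subseteq> bpreds P"
  by (auto simp: subsume_step_def bpreds_def)

lemma headgen_bpreds: "headgen_step P P' \<Longrightarrow> bpreds P' \<subseteq> bpreds P"
  by (rule bpredsI) (auto simp: headgen_step_def bpreds_def)

lemma casesplit_bpreds: "casesplit_step P P' \<Longrightarrow> bpreds P' \<subseteq> bpreds P"
  by (rule bpredsI) (auto simp: casesplit_step_def bpreds_def subst_cl_def)

lemma eqelim_bpreds: "eqelim_step P P' \<Longrightarrow> bpreds P' \<subseteq> bpreds P"
proof (rule bpredsI)
  fix C' assume e: "eqelim_step P P'" and C': "C' \<in> P'" "C' \<notin> P"
  obtain C G1 t1 t2 G2 where C: "C \<in> P" and bC: "bd C = G1 @ [Eq t1 t2] @ G2"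
    and P': "if unifiable [t1] [t2]
        then (\<exists>\<theta>. is_mgu \<theta> [t1] [t2] \<and> P' = (P - {C}) \<union> {subst_cl \<theta> (Cl (hd C) (G1 @ G2))})
        else P' = P - {C}" using e unfolding eqelim_step_def by blast
  have "gpreds (bd C') \<subseteq> gpreds (bd C)" using P' C' bC by (auto split: if_splits)
  then show "gpreds (bd C') \<subseteq> bpreds P" using in_bpreds[OF C] by blast
qed

lemma diseq_bpreds: "diseq_step P P' \<Longrightarrow> bpreds P' \<subseteq> bpreds P"
proof (rule bpredsI)
  fix C' assume d: "diseq_step P P'" and C': "C' \<in> P'" "C' \<notin> P"
  show "gpreds (bd C') \<subseteq> bpreds P"
  using d proof (cases rule: diseq_cases)
    case (1 C G1 t1 t2 G2)
    then show ?thesis using C' in_bpreds[OF 1(1)] by auto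
  next
    case (2 C G1 f ts us G2)
    then show ?thesis using C' in_bpreds[OF 2(1)] by auto
  next
    case (3 C G1 X G2)
    then show ?thesis using C' by auto
  next
    case (4 C G1 t X G2)
    then show ?thesis using C' in_bpreds[OF 4(1)] by auto
  next
    case (5 C G1 X t1 G2 t2 G3 \<rho>)
    then show ?thesis using C' in_bpreds[OF 5(1)] by auto
  qed
qed

lemma fold_bpreds: "fold_step Defs P newp P' \<Longrightarrow> bpreds P' \<subseteq> bpreds P \<union> {newp}"
proof -
  assume f: "fold_step Defs P newp P'"
  define Ds where "Ds = {D\<in>Defs. hpred (hd D) = newp}"
  obtain H G1 G2 \<theta> Cf \<rho> where ne: "Ds \<noteq> {}"
    and cf: "\<forall>D\<in>Ds. Cf D \<in> P \<and> inj (\<rho> D) \<and>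
           subst_cl (ren (\<rho> D)) (Cf D) = Cl H (G1 @ subst_goal \<theta> (bd D) @ G2)"
    and P': "\<forall>D\<in>Ds. P' = (P - Cf ` Ds) \<union> {Cl H (G1 @ [Rel (fst newp) (map (subst_tm \<theta>) (snd (hd D)))] @ G2)}"
    by (rule fold_cases[OF f Ds_def])
  obtain D0 where D0: "D0 \<in> Ds" using ne by blast
  have P'0: "P' = (P - Cf ` Ds) \<union> {Cl H (G1 @ [Rel (fst newp) (map (subst_tm \<theta>) (snd (hd D0)))] @ G2)}"
    using bspec[OF P' D0] .
  have c0: "Cf D0 \<in> P" "subst_cl (ren (\<rho> D0)) (Cf D0) = Cl H (G1 @ subst_goal \<theta> (bd D0) @ G2)"
    using cf D0 by auto
  have "gpreds (G1 @ subst_goal \<theta> (bd D0) @ G2) = gpreds (bd (Cf D0))"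
    using arg_cong[OF c0(2), of "\<lambda>C. gpreds (bd C)"] by simp
  then have g12: "gpreds G1 \<union> gpreds G2 \<subseteq> bpreds P" using in_bpreds[OF c0(1)] by auto
  have np: "apred (Rel (fst newp) (map (subst_tm \<theta>) (snd (hd D0)))) = {newp}"
    using D0 by (cases newp) (auto simp: Ds_def hpred_def)
  show ?thesis unfolding P'0 using g12 np by (auto simp: bpreds_def)
qed


lemma wf_complete:
  fixes \<mu> :: "hatom \<Rightarrow> nat"
  assumes H: "\<And>A. R A \<Longrightarrow> (\<exists>C\<in>P. \<exists>\<sigma>. ground_subst \<sigma> \<and> subst_hd \<sigma> (hd C) = A \<and>
       (\<forall>a\<in>set (subst_goal \<sigma> (bd C)). \<not> is_nonbasic a \<longrightarrow> hsat {} a) \<and>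
       (\<forall>p ts. Rel p ts \<in> set (subst_goal \<sigma> (bd C)) \<longrightarrow> R (p, ts) \<and> \<mu> (p, ts) < \<mu> A))"
    and RA: "R A"
  shows "A \<in> least_model P"
  unfolding least_model_def
proof (intro InterI, clarify)
  fix I assume hI: "herbrand_interp I" and mI: "models I P"
  show "A \<in> I" using RA
  proof (induction "\<mu> A" arbitrary: A rule: less_induct)
    case less
    obtain C \<sigma> where C: "C \<in> P" and g: "ground_subst \<sigma>" and h: "subst_hd \<sigma> (hd C) = A"
      and b: "\<forall>a\<in>set (subst_goal \<sigma> (bd C)). \<not> is_nonbasic a \<longrightarrow> hsat {} a"
      and r: "\<forall>p ts. Rel p ts \<in> set (subst_goal \<sigma> (bd C)) \<longrightarrow> R (p, ts) \<and> \<mu> (p, ts) < \<mu> A"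
      using H[OF less.prems] by blast
    have "set (batoms (subst_goal \<sigma> (bd C))) \<subseteq> I"
    proof
      fix B assume "B \<in> set (batoms (subst_goal \<sigma> (bd C)))"
      moreover obtain p ts where B: "B = (p, ts)" by (cases B)
      ultimately have "Rel p ts \<in> set (subst_goal \<sigma> (bd C))" by (simp add: in_batoms)
      then show "B \<in> I" using less.hyps r B by auto
    qed
    then have "gsat I (subst_goal \<sigma> (bd C))" using b by (simp add: gsat_iff)
    then show "A \<in> I" using mI C g h unfolding models_def by auto
  qed
qed

lemma pp_hd: "C \<in> P \<Longrightarrow> hpred (hd C) \<in> prog_preds P"
  by (auto simp: prog_preds_def)

lemma pp_bd: "C \<in> P \<Longrightarrow> gpreds (bd C) \<subseteq> prog_preds P"
  by (auto simp: prog_preds_def)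

lemma defs_upto_E: "D \<in> defs_upto lab k \<Longrightarrow> \<exists>j<k. \<exists>Ds. lab j = RDef Ds \<and> D \<in> Ds"
  by (auto simp: defs_upto_def)

lemma defs_upto_mono: "k \<le> k' \<Longrightarrow> defs_upto lab k \<subseteq> defs_upto lab k'"
  unfolding defs_upto_def using order_less_le_trans by blast

lemma list_all2_map_self: "(\<And>x. x \<in> set xs \<Longrightarrow> P x (f x)) \<Longrightarrow> list_all2 P xs (map f xs)"
  by (induction xs) auto

lemma defs_upto_Suc: "defs_upto lab (Suc k) = defs_upto lab k \<union> (case lab k of RDef Ds \<Rightarrow> Ds | _ \<Rightarrow> {})"
  by (auto simp: defs_upto_def less_Suc_eq split: rule_app.splits)

locale tseq =
  fixes Ps :: "nat \<Rightarrow> program" and lab :: "nat \<Rightarrow> rule_app" and n :: nat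
  assumes seq: "transf_seq Ps lab n"
begin

lemma ts: "k < n \<Longrightarrow> tstep Ps lab k"
  using seq by (auto simp: transf_seq_def)

lemma st_def: "k < n \<Longrightarrow> lab k = RDef Ds \<Longrightarrow> def_intro Ps k Ds (Ps (Suc k))"
  and st_elim: "k < n \<Longrightarrow> lab k = RElim q \<Longrightarrow> def_elim (Ps k) q (Ps (Suc k))"
  and st_unfold: "k < n \<Longrightarrow> lab k = RUnfold C \<Longrightarrow> unfold_step (Ps k) C (Ps (Suc k))"
  and st_fold: "k < n \<Longrightarrow> lab k = RFold q \<Longrightarrow> fold_step (defs_upto lab k) (Ps k) q (Ps (Suc k))"
  and st_subsume: "k < n \<Longrightarrow> lab k = RSubsume \<Longrightarrow> subsume_step (Ps k) (Ps (Suc k))"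
  and st_headgen: "k < n \<Longrightarrow> lab k = RHeadGen \<Longrightarrow> headgen_step (Ps k) (Ps (Suc k))"
  and st_casesplit: "k < n \<Longrightarrow> lab k = RCaseSplit \<Longrightarrow> casesplit_step (Ps k) (Ps (Suc k))"
  and st_eqelim: "k < n \<Longrightarrow> lab k = REqElim \<Longrightarrow> eqelim_step (Ps k) (Ps (Suc k))"
  and st_diseq: "k < n \<Longrightarrow> lab k = RDiseq \<Longrightarrow> diseq_step (Ps k) (Ps (Suc k))"
  using ts[of k] by (auto simp: tstep_def Let_def)

lemma def_facts:
  assumes "j < n" "lab j = RDef Ds" "D \<in> Ds"
  shows "D \<in> Ps (Suc j)" "\<And>i. i \<le> j \<Longrightarrow> hpred (hd D) \<notin> prog_preds (Ps i)"
    "gpreds (bd D) \<subseteq> prog_preds (Ps 0)" "\<And>D'. D' \<in> Ds \<Longrightarrow> hd D' = hd D"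
proof -
  have di: "def_intro Ps j Ds (Ps (Suc j))" using st_def assms by auto
  then obtain newp Xs where hdD: "\<forall>D\<in>Ds. hd D = (newp, map Var Xs)"
    and fr: "\<forall>i\<le>j. (newp, length Xs) \<notin> prog_preds (Ps i)"
    and bd: "\<forall>D\<in>Ds. gpreds (bd D) \<subseteq> prog_preds (Ps 0)" and P': "Ps (Suc j) = Ps j \<union> Ds"
    unfolding def_intro_def by blast
  show "D \<in> Ps (Suc j)" using P' assms by auto
  show "\<And>i. i \<le> j \<Longrightarrow> hpred (hd D) \<notin> prog_preds (Ps i)" using fr hdD assms by (auto simp: hpred_def)
  show "gpreds (bd D) \<subseteq> prog_preds (Ps 0)" using bd assms by auto
  show "\<And>D'. D' \<in> Ds \<Longrightarrow> hd D' = hd D" using hdD assms by auto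
qed

lemma same_step:
  assumes "j1 < n" "lab j1 = RDef Ds1" "D1 \<in> Ds1" "j2 < n" "lab j2 = RDef Ds2" "D2 \<in> Ds2"
    "hpred (hd D1) = hpred (hd D2)"
  shows "j1 = j2"
proof (rule ccontr)
  assume "j1 \<noteq> j2"
  then consider "j1 < j2" | "j2 < j1" by linarith
  then show False
  proof cases
    case 1
    have "hpred (hd D1) \<in> prog_preds (Ps (Suc j1))" using def_facts(1)[OF assms(1-3)] pp_hd by blast
    moreover have "hpred (hd D2) \<notin> prog_preds (Ps (Suc j1))" using def_facts(2)[OF assms(4-6)] 1 by auto
    ultimately show False using assms(7) by simp
  next
    case 2
    have "hpred (hd D2) \<in> prog_preds (Ps (Suc j2))" using def_facts(1)[OF assms(4-6)] pp_hd by blast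
    moreover have "hpred (hd D1) \<notin> prog_preds (Ps (Suc j2))" using def_facts(2)[OF assms(1-3)] 2 by auto
    ultimately show False using assms(7) by simp
  qed
qed

definition Old where "Old = prog_preds (Ps 0)"
definition DN where "DN = defs_upto lab n"
definition Q where "Q = Ps 0 \<union> DN"
definition M0 where "M0 = least_model Q"
definition cst :: "clause \<Rightarrow> nat" where "cst C = (if C \<in> Ps 0 then 1 else 0)"
definition w :: "hatom \<Rightarrow> nat" where "w A = (LEAST m. prov Q cst A m)"
definition Intro where "Intro k = (\<lambda>D. hpred (hd D)) ` defs_upto lab k"
definition FoldP where "FoldP k = {q. \<exists>k'<k. lab k' = RFold q}"

lemma DN_E: "k \<le> n \<Longrightarrow> D \<in> defs_upto lab k \<Longrightarrow> \<exists>j<k. \<exists>Ds. lab j = RDef Ds \<and> D \<in> Ds \<and> j < n"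
  using defs_upto_E by fastforce

lemma DN_notold: "D \<in> DN \<Longrightarrow> hpred (hd D) \<notin> Old"
  using DN_E[of n D] def_facts(2)[of _ _ D 0] by (auto simp: DN_def Old_def)

lemma DN_notP0: "D \<in> DN \<Longrightarrow> D \<notin> Ps 0"
  using DN_notold pp_hd by (auto simp: Old_def)

lemma DN_body: "D \<in> DN \<Longrightarrow> gpreds (bd D) \<subseteq> Old"
  using DN_E[of n D] def_facts(3)[of _ _ D] by (auto simp: DN_def Old_def)

lemma DN_same_hd: "D1 \<in> DN \<Longrightarrow> D2 \<in> DN \<Longrightarrow> hpred (hd D1) = hpred (hd D2) \<Longrightarrow> hd D1 = hd D2"
proof -
  assume a: "D1 \<in> DN" "D2 \<in> DN" "hpred (hd D1) = hpred (hd D2)"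
  obtain j1 Ds1 where 1: "j1 < n" "lab j1 = RDef Ds1" "D1 \<in> Ds1" using DN_E[of n D1] a by (auto simp: DN_def)
  obtain j2 Ds2 where 2: "j2 < n" "lab j2 = RDef Ds2" "D2 \<in> Ds2" using DN_E[of n D2] a by (auto simp: DN_def)
  have "j1 = j2" using same_step[OF 1 2 a(3)] .
  then have "Ds1 = Ds2" using 1 2 by simp
  then show ?thesis using def_facts(4)[OF 1] 2 by metis
qed

lemma DN_in_k: "k \<le> n \<Longrightarrow> D \<in> DN \<Longrightarrow> hpred (hd D) \<in> Intro k \<Longrightarrow> D \<in> defs_upto lab k"
proof -
  assume a: "k \<le> n" "D \<in> DN" "hpred (hd D) \<in> Intro k"
  obtain D' where D': "D' \<in> defs_upto lab k" "hpred (hd D') = hpred (hd D)" using a(3) by (auto simp: Intro_def)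
  obtain j1 Ds1 where 1: "j1 < n" "lab j1 = RDef Ds1" "D \<in> Ds1" using DN_E[of n D] a by (auto simp: DN_def)
  obtain j2 Ds2 where 2: "j2 < k" "lab j2 = RDef Ds2" "D' \<in> Ds2" using defs_upto_E[OF D'(1)] by auto
  have "j1 = j2" using same_step[OF 1 _ 2(2,3)] 2(1) a(1) D'(2) by auto
  then show ?thesis using 1 2 by (auto simp: defs_upto_def)
qed

lemma DN_upto: "k \<le> n \<Longrightarrow> defs_upto lab k \<subseteq> DN"
  by (simp add: DN_def defs_upto_mono)

lemma M0_models: "models M0 Q" and M0_herbrand: "herbrand_interp M0"
  by (simp_all add: M0_def lm_models lm_herbrand)

lemma M0_prov: "A \<in> M0 \<longleftrightarrow> (\<exists>m. prov Q cst A m)"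
  using lm_char[of Q cst] by (auto simp: M0_def)

lemma w_le: "prov Q cst A m \<Longrightarrow> w A \<le> m"
  unfolding w_def by (rule Least_le)

lemma w_prov: "A \<in> M0 \<Longrightarrow> prov Q cst A (w A)"
  unfolding w_def using M0_prov by (metis LeastI_ex)

lemma sum_w_le: "list_all2 (prov Q cst) xs ns \<Longrightarrow> sum_list (map w xs) \<le> sum_list ns"
  by (induction rule: list_all2_induct) (auto intro: add_mono w_le)

lemma minwit: "A \<in> M0 \<Longrightarrow> \<exists>C\<in>Q. \<exists>\<sigma>. ground_subst \<sigma> \<and> subst_hd \<sigma> (hd C) = A \<and>
    gsat M0 (subst_goal \<sigma> (bd C)) \<and> cst C + wsum w (subst_goal \<sigma> (bd C)) \<le> w A"
proof -
  assume "A \<in> M0"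
  then have "prov Q cst A (w A)" by (rule w_prov)
  then obtain C \<sigma> ns where c1: "C \<in> Q" "ground_subst \<sigma>" "hd (subst_cl \<sigma> C) = A"
    "\<forall>a\<in>set (bd (subst_cl \<sigma> C)). \<not> is_nonbasic a \<longrightarrow> hsat {} a"
    "list_all2 (prov Q cst) (batoms (bd (subst_cl \<sigma> C))) ns" "w A = cst C + sum_list ns"
    by (cases rule: prov.cases) auto
  have "sum_list (map w (batoms (bd (subst_cl \<sigma> C)))) \<le> sum_list ns" using sum_w_le[OF c1(5)] .
  moreover have "set (batoms (bd (subst_cl \<sigma> C))) \<subseteq> M0"
    using list_all2_in[OF c1(5)] M0_prov by blast
  moreover have "\<forall>a\<in>set (bd (subst_cl \<sigma> C)). \<not> is_nonbasic a \<longrightarrow> hsat M0 a"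
    using c1(4) hsat_basic by blast
  ultimately have g1: "gsat M0 (subst_goal \<sigma> (bd C))" and g2: "cst C + wsum w (subst_goal \<sigma> (bd C)) \<le> w A"
    using c1 by (auto simp: wsum_def gsat_iff hsat_basic)
  have g3: "subst_hd \<sigma> (hd C) = A" using c1(3) by simp
  show ?thesis using c1(2) g1 g2 g3 by (intro bexI[OF _ c1(1)] exI[of _ \<sigma>]) auto
qed

lemma clw: "C \<in> Q \<Longrightarrow> ground_subst \<sigma> \<Longrightarrow> gsat M0 (subst_goal \<sigma> (bd C)) \<Longrightarrow>
   subst_hd \<sigma> (hd C) \<in> M0 \<and> w (subst_hd \<sigma> (hd C)) \<le> cst C + wsum w (subst_goal \<sigma> (bd C))"
proof -
  assume C: "C \<in> Q" and g: "ground_subst \<sigma>" and s: "gsat M0 (subst_goal \<sigma> (bd C))"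
  have b: "\<forall>a\<in>set (bd (subst_cl \<sigma> C)). \<not> is_nonbasic a \<longrightarrow> hsat {} a"
    and sb: "set (batoms (bd (subst_cl \<sigma> C))) \<subseteq> M0" using s by (auto simp: gsat_iff)
  have "list_all2 (prov Q cst) (batoms (bd (subst_cl \<sigma> C))) (map w (batoms (bd (subst_cl \<sigma> C))))"
    using sb w_prov by (intro list_all2_map_self) blast
  then have "prov Q cst (subst_hd \<sigma> (hd C)) (cst C + wsum w (subst_goal \<sigma> (bd C)))"
    using prov.intros[OF C g _ b] by (simp add: wsum_def)
  then show ?thesis using M0_prov w_le by blast
qed

lemma M0_pred: "A \<in> M0 \<Longrightarrow> hpred A \<in> Old \<union> Intro n"
proof -
  assume "A \<in> M0"
  then obtain C \<sigma> where "C \<in> Q" "subst_hd \<sigma> (hd C) = A" using minwit by blast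
  then show ?thesis using pp_hd[of C "Ps 0"] by (auto simp: Q_def Old_def Intro_def DN_def)
qed

end


context tseq begin

definition delta :: "nat \<Rightarrow> hatom \<Rightarrow> nat" where
  "delta k A = (if hpred A \<in> Old then 1 else
     if (\<exists>D\<in>DN. \<exists>\<sigma>. ground_subst \<sigma> \<and> subst_hd \<sigma> (hd D) = A \<and> gsat M0 (subst_goal \<sigma> (bd D)) \<and>
            wsum w (subst_goal \<sigma> (bd D)) \<le> w A \<and> (\<exists>j<k. lab j = RUnfold D)) then 1 else 0)"

definition wit :: "program \<Rightarrow> nat \<Rightarrow> hatom \<Rightarrow> bool" where
  "wit P d A = (\<exists>C\<in>P. \<exists>\<sigma>. ground_subst \<sigma> \<and> subst_hd \<sigma> (hd C) = A \<and> gsat M0 (subst_goal \<sigma> (bd C)) \<and>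
      wsum w (subst_goal \<sigma> (bd C)) + d \<le> w A)"

definition Inv :: "nat \<Rightarrow> bool" where
  "Inv k = (\<forall>A\<in>M0. hpred A \<in> Old \<union> Intro k \<longrightarrow> wit (Ps k) (delta k A) A)"

definition BInv :: "nat \<Rightarrow> bool" where
  "BInv k = (bpreds (Ps k) \<subseteq> Old \<union> FoldP k)"

lemma delta_le1: "delta k A \<le> 1"
  by (auto simp: delta_def)

lemma delta_old: "hpred A \<in> Old \<Longrightarrow> delta k A = 1"
  by (auto simp: delta_def)

definition Ed :: "nat \<Rightarrow> hatom \<Rightarrow> bool" where
  "Ed k A = (\<exists>D\<in>DN. \<exists>\<sigma>. ground_subst \<sigma> \<and> subst_hd \<sigma> (hd D) = A \<and> gsat M0 (subst_goal \<sigma> (bd D)) \<and>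
            wsum w (subst_goal \<sigma> (bd D)) \<le> w A \<and> (\<exists>j<k. lab j = RUnfold D))"

lemma delta_Ed: "delta k A = (if hpred A \<in> Old then 1 else if Ed k A then 1 else 0)"
  unfolding delta_def Ed_def ..

lemma Ed_mono: "Ed k A \<Longrightarrow> Ed (Suc k) A"
proof -
  assume "Ed k A"
  then obtain D \<sigma> j where "D \<in> DN" "ground_subst \<sigma>" "subst_hd \<sigma> (hd D) = A" "gsat M0 (subst_goal \<sigma> (bd D))"
    "wsum w (subst_goal \<sigma> (bd D)) \<le> w A" "j < k" "lab j = RUnfold D" unfolding Ed_def by blast
  then show ?thesis unfolding Ed_def by (intro bexI[of _ D] exI[of _ \<sigma>]) (auto intro: less_SucI)
qed

lemma delta_mono: "delta k A \<le> delta (Suc k) A"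
  unfolding delta_Ed using Ed_mono by auto

lemma Ed_same: "(\<forall>D. lab k \<noteq> RUnfold D) \<Longrightarrow> Ed (Suc k) A \<Longrightarrow> Ed k A"
proof -
  assume ne: "\<forall>D. lab k \<noteq> RUnfold D" and "Ed (Suc k) A"
  then obtain D \<sigma> j where "D \<in> DN" "ground_subst \<sigma>" "subst_hd \<sigma> (hd D) = A" "gsat M0 (subst_goal \<sigma> (bd D))"
    "wsum w (subst_goal \<sigma> (bd D)) \<le> w A" "j < Suc k" "lab j = RUnfold D" unfolding Ed_def by blast
  moreover have "j < k" using ne \<open>j < Suc k\<close> \<open>lab j = RUnfold D\<close> less_Suc_eq by auto
  ultimately show ?thesis unfolding Ed_def by (intro bexI[of _ D] exI[of _ \<sigma>]) auto
qed

lemma delta_same: "(\<forall>D. lab k \<noteq> RUnfold D) \<Longrightarrow> delta (Suc k) A = delta k A"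
  unfolding delta_Ed using Ed_same Ed_mono by auto

lemma wit_wp: "wit P d A \<Longrightarrow> wp M0 w P P' \<Longrightarrow> wit P' d A"
proof -
  assume a: "wit P d A" and b: "wp M0 w P P'"
  obtain C \<sigma> where C: "C \<in> P" "ground_subst \<sigma>" "subst_hd \<sigma> (hd C) = A" "gsat M0 (subst_goal \<sigma> (bd C))"
    "wsum w (subst_goal \<sigma> (bd C)) + d \<le> w A" using a unfolding wit_def by blast
  obtain C' \<sigma>' where "C' \<in> P'" "ground_subst \<sigma>'" "subst_hd \<sigma>' (hd C') = subst_hd \<sigma> (hd C)"
    "gsat M0 (subst_goal \<sigma>' (bd C'))" "wsum w (subst_goal \<sigma>' (bd C')) \<le> wsum w (subst_goal \<sigma> (bd C))"
    using b C(1,2,4) unfolding wp_def by blast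
  then show ?thesis using C unfolding wit_def by (intro bexI[of _ C'] exI[of _ \<sigma>']) auto
qed

lemma wit_le: "wit P d A \<Longrightarrow> d' \<le> d \<Longrightarrow> wit P d' A"
  unfolding wit_def by (meson add_left_mono order_trans)

lemma fold_step_ne: "fold_step Defs P newp P' \<Longrightarrow> {D\<in>Defs. hpred (hd D) = newp} \<noteq> {}"
  unfolding fold_step_def Let_def by (rule conjunct1)

lemma fold_ne: "k < n \<Longrightarrow> lab k = RFold q \<Longrightarrow> q \<in> Intro k"
proof -
  assume a: "k < n" "lab k = RFold q"
  have f: "fold_step (defs_upto lab k) (Ps k) q (Ps (Suc k))" using st_fold a by auto
  have "{D\<in>defs_upto lab k. hpred (hd D) = q} \<noteq> {}" using fold_step_ne[OF f] .
  then show ?thesis by (auto simp: Intro_def)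
qed

lemma Intro_mono: "k \<le> k' \<Longrightarrow> Intro k \<subseteq> Intro k'"
  unfolding Intro_def using defs_upto_mono by (meson image_mono)

lemma FoldP_Intro: "k \<le> n \<Longrightarrow> FoldP k \<subseteq> Intro k"
proof
  fix q assume k: "k \<le> n" and "q \<in> FoldP k"
  then obtain k' where k': "k' < k" "lab k' = RFold q" by (auto simp: FoldP_def)
  then have "q \<in> Intro k'" using fold_ne k by simp
  then show "q \<in> Intro k" using Intro_mono[of k' k] k' by auto
qed

lemma Intro_notold: "k \<le> n \<Longrightarrow> q \<in> Intro k \<Longrightarrow> q \<notin> Old"
proof -
  assume k: "k \<le> n" and "q \<in> Intro k"
  then obtain D where "D \<in> defs_upto lab k" "q = hpred (hd D)" by (auto simp: Intro_def)
  then have "D \<in> DN" "q = hpred (hd D)" using DN_upto[OF k] by auto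
  then show ?thesis using DN_notold by simp
qed

lemma DN_Q: "DN \<subseteq> Q" by (auto simp: Q_def)

lemma pred_new_wit:
  assumes "k \<le> n" "N \<in> M0" "hpred N \<in> Intro k"
  shows "\<exists>D\<in>defs_upto lab k. \<exists>\<tau>. ground_subst \<tau> \<and> subst_hd \<tau> (hd D) = N \<and>
           gsat M0 (subst_goal \<tau> (bd D)) \<and> wsum w (subst_goal \<tau> (bd D)) \<le> w N"
proof -
  obtain C \<tau> where C: "C \<in> Q" "ground_subst \<tau>" "subst_hd \<tau> (hd C) = N" "gsat M0 (subst_goal \<tau> (bd C))"
    "cst C + wsum w (subst_goal \<tau> (bd C)) \<le> w N" using minwit[OF assms(2)] by blast
  have hp: "hpred (hd C) = hpred N" using C(3) by auto
  have "C \<notin> Ps 0"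
  proof
    assume "C \<in> Ps 0"
    then have "hpred N \<in> Old" using hp pp_hd[OF \<open>C \<in> Ps 0\<close>] by (simp add: Old_def)
    then show False using Intro_notold assms by blast
  qed
  then have "C \<in> DN" using C(1) by (auto simp: Q_def)
  then have "C \<in> defs_upto lab k" using DN_in_k assms(1,3) hp by auto
  then show ?thesis using C by (intro bexI[of _ C]) auto
qed

lemma sound_step:
  assumes k: "k < n" and m: "models M0 (Ps k)"
  shows "models M0 (Ps (Suc k))"
proof (cases "lab k")
  case (RDef Ds)
  have "Ps (Suc k) = Ps k \<union> Ds" using st_def[OF k RDef] by (auto simp: def_intro_def)
  moreover have "Ds \<subseteq> Q" using RDef k by (auto simp: Q_def DN_def defs_upto_def)
  moreover have "models M0 Ds" using models_subset[OF M0_models] \<open>Ds \<subseteq> Q\<close> .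
  ultimately show ?thesis using m unfolding models_valid by blast
next
  case (RElim q)
  then show ?thesis using st_elim[OF k RElim] models_subset[OF m] by (auto simp: def_elim_def)
next
  case (RUnfold C)
  then show ?thesis using st_unfold[OF k RUnfold] m unfold_sound by blast
next
  case (RFold q)
  have f: "fold_step (defs_upto lab k) (Ps k) q (Ps (Suc k))" using st_fold[OF k RFold] .
  have qI: "q \<in> Intro k" using fold_ne[OF k RFold] .
  have supp: "\<forall>N\<in>M0. hpred N = q \<longrightarrow> (\<exists>D\<in>defs_upto lab k. hpred (hd D) = q \<and>
                 (\<exists>\<tau>. ground_subst \<tau> \<and> subst_hd \<tau> (hd D) = N \<and> gsat M0 (subst_goal \<tau> (bd D))))"
  proof (intro ballI impI)
    fix N assume N: "N \<in> M0" "hpred N = q"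
    have kn: "k \<le> n" using k by simp
    have NI: "hpred N \<in> Intro k" using N(2) qI by simp
    obtain D where D: "D \<in> defs_upto lab k" and ex: "\<exists>\<tau>. ground_subst \<tau> \<and> subst_hd \<tau> (hd D) = N \<and>
         gsat M0 (subst_goal \<tau> (bd D)) \<and> wsum w (subst_goal \<tau> (bd D)) \<le> w N"
      using pred_new_wit[OF kn N(1) NI] by (rule bexE)
    from ex obtain \<tau> where t: "ground_subst \<tau>" "subst_hd \<tau> (hd D) = N" "gsat M0 (subst_goal \<tau> (bd D))"
      by blast
    have hq: "hpred (hd D) = q" using t(2) N(2) hpred_subst[of \<tau> "hd D"] by simp
    show "\<exists>D\<in>defs_upto lab k. hpred (hd D) = q \<and>
               (\<exists>\<tau>. ground_subst \<tau> \<and> subst_hd \<tau> (hd D) = N \<and> gsat M0 (subst_goal \<tau> (bd D)))"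
      apply (rule bexI[OF _ D])
      apply (rule conjI[OF hq])
      apply (rule exI[of _ \<tau>])
      using t by (intro conjI)
  qed
  have sameh: "\<forall>D1\<in>defs_upto lab k. \<forall>D2\<in>defs_upto lab k. hpred (hd D1) = q \<longrightarrow> hpred (hd D2) = q \<longrightarrow> hd D1 = hd D2"
  proof (intro ballI impI)
    fix D1 D2 assume a: "D1 \<in> defs_upto lab k" "D2 \<in> defs_upto lab k" "hpred (hd D1) = q" "hpred (hd D2) = q"
    have "defs_upto lab k \<subseteq> DN" using DN_upto k by simp
    then have "D1 \<in> DN" "D2 \<in> DN" using a by auto
    then show "hd D1 = hd D2" using DN_same_hd[of D1 D2] a(3,4) by simp
  qed
  show ?thesis using fold_sound[OF f m supp sameh] .
next
  case RSubsume then show ?thesis using st_subsume[OF k] m subsume_sound by blast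
next
  case RHeadGen then show ?thesis using st_headgen[OF k] m headgen_sound by blast
next
  case RCaseSplit then show ?thesis using st_casesplit[OF k] m casesplit_sound by blast
next
  case REqElim then show ?thesis using st_eqelim[OF k] m eqelim_sound by blast
next
  case RDiseq then show ?thesis using st_diseq[OF k] m diseq_sound by blast
qed

lemma FoldP_Suc: "FoldP k \<subseteq> FoldP (Suc k)"
  unfolding FoldP_def using less_SucI by blast

lemma FoldP_Suc2: "lab k = RFold q \<Longrightarrow> q \<in> FoldP (Suc k)"
  unfolding FoldP_def by blast

lemma binv0: "BInv 0"
  by (auto simp: BInv_def bpreds_def Old_def prog_preds_def)

lemma binv_step:
  assumes k: "k < n" and ne: "\<forall>q. lab k \<noteq> RElim q" and b: "BInv k"
  shows "BInv (Suc k)"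
proof -
  have b': "bpreds (Ps k) \<subseteq> Old \<union> FoldP (Suc k)" using b FoldP_Suc by (auto simp: BInv_def)
  have "bpreds (Ps (Suc k)) \<subseteq> Old \<union> FoldP (Suc k)"
  proof (cases "lab k")
    case (RDef Ds)
    have "Ps (Suc k) = Ps k \<union> Ds" using st_def[OF k RDef] by (auto simp: def_intro_def)
    moreover have "bpreds Ds \<subseteq> Old" using def_facts(3)[OF k RDef] by (auto simp: bpreds_def Old_def)
    ultimately show "bpreds (Ps (Suc k)) \<subseteq> Old \<union> FoldP (Suc k)" using b' by (auto simp: bpreds_def)
  next
    case (RElim q) then show ?thesis using ne by auto
  next
    case (RUnfold C) then show ?thesis using unfold_bpreds[OF st_unfold[OF k RUnfold]] b' by auto
  next
    case (RFold q) then show ?thesis using fold_bpreds[OF st_fold[OF k RFold]] b' FoldP_Suc2[OF RFold] by auto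
  next
    case RSubsume then show ?thesis using subsume_bpreds[OF st_subsume[OF k]] b' by auto
  next
    case RHeadGen then show ?thesis using headgen_bpreds[OF st_headgen[OF k]] b' by auto
  next
    case RCaseSplit then show ?thesis using casesplit_bpreds[OF st_casesplit[OF k]] b' by auto
  next
    case REqElim then show ?thesis using eqelim_bpreds[OF st_eqelim[OF k]] b' by auto
  next
    case RDiseq then show ?thesis using diseq_bpreds[OF st_diseq[OF k]] b' by auto
  qed
  then show ?thesis by (simp add: BInv_def)
qed

end


context tseq begin

lemma Intro_Suc_same: "(\<forall>Ds. lab k \<noteq> RDef Ds) \<Longrightarrow> Intro (Suc k) = Intro k"
  unfolding Intro_def by (simp add: defs_upto_Suc split: rule_app.splits)

lemma inv0: "Inv 0"
  unfolding Inv_def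
proof (intro ballI impI)
  fix A assume A: "A \<in> M0" "hpred A \<in> Old \<union> Intro 0"
  then have old: "hpred A \<in> Old" by (auto simp: Intro_def defs_upto_def)
  obtain C \<sigma> where C: "C \<in> Q" "ground_subst \<sigma>" "subst_hd \<sigma> (hd C) = A" "gsat M0 (subst_goal \<sigma> (bd C))"
    "cst C + wsum w (subst_goal \<sigma> (bd C)) \<le> w A" using minwit[OF A(1)] by blast
  have "C \<notin> DN"
  proof
    assume "C \<in> DN"
    then have "hpred (hd C) \<notin> Old" by (rule DN_notold)
    then show False using C(3) old by auto
  qed
  then have "C \<in> Ps 0" using C(1) by (auto simp: Q_def)
  then have "wit (Ps 0) 1 A" using C unfolding wit_def cst_def by (intro bexI[of _ C] exI[of _ \<sigma>]) auto
  then show "wit (Ps 0) (delta 0 A) A" using delta_old[OF old] by simp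
qed

lemma inv_wp:
  assumes i: "Inv k" and nd: "\<forall>Ds. lab k \<noteq> RDef Ds" and nu: "\<forall>D. lab k \<noteq> RUnfold D"
    and wp: "wp M0 w (Ps k) (Ps (Suc k))"
  shows "Inv (Suc k)"
  unfolding Inv_def
proof (intro ballI impI)
  fix A assume A: "A \<in> M0" "hpred A \<in> Old \<union> Intro (Suc k)"
  then have "wit (Ps k) (delta k A) A" using i Intro_Suc_same[OF nd] by (auto simp: Inv_def)
  then show "wit (Ps (Suc k)) (delta (Suc k) A) A" using wit_wp[OF _ wp] delta_same[OF nu] by simp
qed

lemma body_wit:
  assumes i: "Inv k" and b: "BInv k" and kn: "k \<le> n" and C: "C \<in> Ps k" and s: "gsat M0 (subst_goal \<sigma> (bd C))"
    and r: "Rel p ts \<in> set (bd C)"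
  shows "wit (Ps k) (delta k (p, map (subst_tm \<sigma>) ts)) (p, map (subst_tm \<sigma>) ts)"
proof -
  have "(p, length ts) \<in> gpreds (bd C)" using r by (force simp: gpreds_def)
  then have "(p, length ts) \<in> Old \<union> Intro k" using b C FoldP_Intro[OF kn] in_bpreds[OF C] by (auto simp: BInv_def)
  moreover have "(p, map (subst_tm \<sigma>) ts) \<in> M0"
  proof -
    have "Rel p (map (subst_tm \<sigma>) ts) \<in> set (subst_goal \<sigma> (bd C))" using r by (force simp: subst_goal_def)
    then show ?thesis using s by (auto simp: gsat_def)
  qed
  ultimately show ?thesis using i by (auto simp: Inv_def hpred_def)
qed

lemma unfold_wit:
  assumes u: "unfold_step (Ps k) C0 (Ps (Suc k))" and g: "ground_subst \<sigma>" and s: "gsat M0 (subst_goal \<sigma> (bd C0))"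
    and W: "\<And>p ts. Rel p ts \<in> set (bd C0) \<Longrightarrow> wit (Ps k) d (p, map (subst_tm \<sigma>) ts)"
    and le: "wsum w (subst_goal \<sigma> (bd C0)) + e \<le> w A" and hA: "subst_hd \<sigma> (hd C0) = A"
    and de: "e' \<le> e + d"
  shows "wit (Ps (Suc k)) e' A"
proof -
  have "\<exists>C'\<in>Ps (Suc k). \<exists>\<sigma>'. ground_subst \<sigma>' \<and> subst_hd \<sigma>' (hd C') = subst_hd \<sigma> (hd C0) \<and>
        gsat M0 (subst_goal \<sigma>' (bd C')) \<and> wsum w (subst_goal \<sigma>' (bd C')) + d \<le> wsum w (subst_goal \<sigma> (bd C0))"
    by (rule unfold_deriv[OF u g s]) (use W in \<open>auto simp: wit_def\<close>)
  then show ?thesis unfolding wit_def using le hA de by fastforce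
qed

lemma inv_step:
  assumes k: "k < n" and ne: "\<forall>q. lab k \<noteq> RElim q" and i: "Inv k" and b: "BInv k"
  shows "Inv (Suc k)"
proof (cases "lab k")
  case (RDef Ds)
  have di: "Ps (Suc k) = Ps k \<union> Ds" using st_def[OF k RDef] by (auto simp: def_intro_def)
  have IS: "Intro (Suc k) = Intro k \<union> (\<lambda>D. hpred (hd D)) ` Ds"
    unfolding Intro_def by (simp add: defs_upto_Suc RDef image_Un)
  have nu: "\<forall>D. lab k \<noteq> RUnfold D" using RDef by auto
  show ?thesis unfolding Inv_def
  proof (intro ballI impI)
    fix A assume A: "A \<in> M0" "hpred A \<in> Old \<union> Intro (Suc k)"
    show "wit (Ps (Suc k)) (delta (Suc k) A) A"
    proof (cases "hpred A \<in> Old \<union> Intro k")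
      case True
      then have "wit (Ps k) (delta k A) A" using i A by (auto simp: Inv_def)
      then show ?thesis using wit_wp[OF _ wp_subset] di delta_same[OF nu] by auto
    next
      case False
      then obtain D0 where D0: "D0 \<in> Ds" "hpred A = hpred (hd D0)" using A IS by auto
      have D0N: "D0 \<in> DN" using D0 k RDef by (auto simp: DN_def defs_upto_def)
      have notold: "hpred A \<notin> Old" using DN_notold[OF D0N] D0 by simp
      have nEd: "\<not> Ed (Suc k) A"
      proof
        assume "Ed (Suc k) A"
        then obtain D \<sigma> j where D: "subst_hd \<sigma> (hd D) = A" "j < Suc k" "lab j = RUnfold D"
          unfolding Ed_def by blast
        have "j < k" using D RDef less_Suc_eq by auto
        then have "D \<in> Ps j" using st_unfold[of j D] D k by (auto simp: unfold_step_def)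
        then have "hpred (hd D) \<in> prog_preds (Ps j)" by (rule pp_hd)
        moreover have "hpred (hd D) = hpred (hd D0)" using D(1) D0(2) by auto
        ultimately show False using def_facts(2)[OF k RDef D0(1), of j] \<open>j < k\<close> by auto
      qed
      have d0: "delta (Suc k) A = 0" using notold nEd by (simp add: delta_Ed)
      obtain C \<sigma> where C: "C \<in> Q" "ground_subst \<sigma>" "subst_hd \<sigma> (hd C) = A" "gsat M0 (subst_goal \<sigma> (bd C))"
        "cst C + wsum w (subst_goal \<sigma> (bd C)) \<le> w A" using minwit[OF A(1)] by blast
      have "C \<notin> Ps 0"
      proof
        assume "C \<in> Ps 0"
        then have "hpred (hd C) \<in> Old" using pp_hd by (auto simp: Old_def)
        then show False using C(3) notold by auto
      qed
      then have CN: "C \<in> DN" using C(1) by (auto simp: Q_def)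
      obtain j1 Ds1 where j1: "j1 < n" "lab j1 = RDef Ds1" "C \<in> Ds1"
        using DN_E[of n C] CN by (auto simp: DN_def)
      have "j1 = k" using same_step[OF j1 k RDef D0(1)] C(3) D0(2) by auto
      then have "C \<in> Ds" using j1 RDef by simp
      then have "C \<in> Ps (Suc k)" using di by simp
      then have "wit (Ps (Suc k)) 0 A" using C \<open>C \<notin> Ps 0\<close> unfolding wit_def cst_def
        by (intro bexI[of _ C] exI[of _ \<sigma>]) auto
      then show ?thesis using d0 by simp
    qed
  qed
next
  case (RElim q) then show ?thesis using ne by auto
next
  case (RUnfold C0)
  have u: "unfold_step (Ps k) C0 (Ps (Suc k))" using st_unfold[OF k RUnfold] .
  have keep: "Ps k - {C0} \<subseteq> Ps (Suc k)" using u unfolding unfold_step_def by blast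
  have C0: "C0 \<in> Ps k" using u unfolding unfold_step_def by blast
  have IS: "Intro (Suc k) = Intro k" using Intro_Suc_same RUnfold by auto
  show ?thesis unfolding Inv_def
  proof (intro ballI impI)
    fix A assume A: "A \<in> M0" "hpred A \<in> Old \<union> Intro (Suc k)"
    have wk: "wit (Ps k) (delta k A) A" using i A IS by (auto simp: Inv_def)
    show "wit (Ps (Suc k)) (delta (Suc k) A) A"
    proof (cases "delta (Suc k) A = delta k A")
      case True
      obtain C \<sigma> where C: "C \<in> Ps k" "ground_subst \<sigma>" "subst_hd \<sigma> (hd C) = A" "gsat M0 (subst_goal \<sigma> (bd C))"
        "wsum w (subst_goal \<sigma> (bd C)) + delta k A \<le> w A" using wk unfolding wit_def by blast
      show ?thesis
      proof (cases "C = C0")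
        case False
        then have "C \<in> Ps (Suc k)" using keep C(1) by auto
        then show ?thesis using C True unfolding wit_def by (intro bexI[of _ C] exI[of _ \<sigma>]) auto
      next
        case Ceq: True
        have "wit (Ps k) 0 (p, map (subst_tm \<sigma>) ts)" if "Rel p ts \<in> set (bd C0)" for p ts
          using body_wit[OF i b _ C0, of \<sigma> p ts] C(4) Ceq that k wit_le by auto
        then show ?thesis using unfold_wit[OF u C(2), of 0 "delta k A" A "delta (Suc k) A"] C Ceq True by auto
      qed
    next
      case False
      then have dk: "delta k A = 0" and dsk: "delta (Suc k) A = 1"
        using delta_mono[of k A] delta_le1[of "Suc k" A] by auto
      then have notold: "hpred A \<notin> Old" using delta_old by fastforce
      have "Ed (Suc k) A" using dsk notold by (simp add: delta_Ed split: if_splits)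
      then obtain D \<sigma> j where D: "D \<in> DN" "ground_subst \<sigma>" "subst_hd \<sigma> (hd D) = A" "gsat M0 (subst_goal \<sigma> (bd D))"
        "wsum w (subst_goal \<sigma> (bd D)) \<le> w A" "j < Suc k" "lab j = RUnfold D" unfolding Ed_def by blast
      have nEd: "\<not> Ed k A" using dk notold by (simp add: delta_Ed split: if_splits)
      have "j = k"
      proof (rule ccontr)
        assume "j \<noteq> k"
        then have "j < k" using D(6) by simp
        then have "Ed k A" using D unfolding Ed_def by blast
        then show False using nEd by simp
      qed
      then have DC: "D = C0" using D(7) RUnfold by simp
      have "wit (Ps k) 1 (p, map (subst_tm \<sigma>) ts)" if r: "Rel p ts \<in> set (bd C0)" for p ts
      proof -
        have "(p, length ts) \<in> gpreds (bd D)" using r DC by (force simp: gpreds_def)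
        then have "(p, length ts) \<in> Old" using DN_body[OF D(1)] by auto
        then have "delta k (p, map (subst_tm \<sigma>) ts) = 1" by (simp add: delta_old hpred_def)
        then show ?thesis using body_wit[OF i b _ C0, of \<sigma> p ts] D(4) DC r k by auto
      qed
      then show ?thesis using unfold_wit[OF u D(2), of 1 0 A "delta (Suc k) A"] D DC dsk by auto
    qed
  qed
next
  case (RFold q)
  have f: "fold_step (defs_upto lab k) (Ps k) q (Ps (Suc k))" using st_fold[OF k RFold] .
  have HD: "\<forall>D\<in>defs_upto lab k. \<forall>\<tau>. ground_subst \<tau> \<longrightarrow> gsat M0 (subst_goal \<tau> (bd D)) \<longrightarrow>
               subst_hd \<tau> (hd D) \<in> M0 \<and> w (subst_hd \<tau> (hd D)) \<le> wsum w (subst_goal \<tau> (bd D))"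
  proof (intro ballI allI impI)
    fix D \<tau> assume D: "D \<in> defs_upto lab k" and g: "ground_subst \<tau>" and s: "gsat M0 (subst_goal \<tau> (bd D))"
    have DN: "D \<in> DN" using D DN_upto[of k] k by auto
    then have "D \<in> Q" "cst D = 0" using DN_notP0 by (auto simp: Q_def cst_def)
    then show "subst_hd \<tau> (hd D) \<in> M0 \<and> w (subst_hd \<tau> (hd D)) \<le> wsum w (subst_goal \<tau> (bd D))"
      using clw[of D \<tau>] g s by auto
  qed
  show ?thesis using inv_wp[OF i _ _ fold_wp[OF f HD]] RFold by auto
next
  case RSubsume then show ?thesis using inv_wp[OF i _ _ subsume_wp[OF st_subsume[OF k]]] by auto
next
  case RHeadGen then show ?thesis using inv_wp[OF i _ _ headgen_wp[OF st_headgen[OF k]]] by auto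
next
  case RCaseSplit then show ?thesis using inv_wp[OF i _ _ casesplit_wp[OF st_casesplit[OF k]]] by auto
next
  case REqElim then show ?thesis using inv_wp[OF i _ _ eqelim_wp[OF st_eqelim[OF k]]] by auto
next
  case RDiseq then show ?thesis using inv_wp[OF i _ _ diseq_wp[OF st_diseq[OF k]]] by auto
qed

end


context tseq begin

lemma all_steps: "N \<le> n \<Longrightarrow> (\<forall>k<N. \<forall>q. lab k \<noteq> RElim q) \<Longrightarrow> models M0 (Ps N) \<and> BInv N \<and> Inv N"
proof (induction N)
  case 0
  have "models M0 (Ps 0)" using models_subset[OF M0_models] by (auto simp: Q_def)
  then show ?case using binv0 inv0 by simp
next
  case (Suc N)
  then have IH: "models M0 (Ps N) \<and> BInv N \<and> Inv N" by auto
  have N: "N < n" "\<forall>q. lab N \<noteq> RElim q" using Suc.prems by auto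
  then show ?case using IH sound_step binv_step inv_step by blast
qed

definition mu :: "nat \<Rightarrow> hatom \<Rightarrow> nat" where
  "mu N B = 2 * w B + (1 - delta N B)"

lemma in_gpreds: "Rel p ts \<in> set G \<Longrightarrow> (p, length ts) \<in> gpreds G"
  by (force simp: gpreds_def)

lemma witN:
  assumes Nn: "N \<le> n" and i: "Inv N" and b: "BInv N" and IN: "Intro N = Intro n"
    and FU: "\<forall>q\<in>FoldP N. \<forall>D\<in>DN. hpred (hd D) = q \<longrightarrow> (\<exists>j<N. lab j = RUnfold D)"
    and A: "A \<in> M0"
  shows "\<exists>C\<in>Ps N. \<exists>\<sigma>. ground_subst \<sigma> \<and> subst_hd \<sigma> (hd C) = A \<and> gsat M0 (subst_goal \<sigma> (bd C)) \<and>
     (\<forall>p ts. Rel p ts \<in> set (subst_goal \<sigma> (bd C)) \<longrightarrow> mu N (p, ts) < mu N A)"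
proof -
  have "hpred A \<in> Old \<union> Intro N" using M0_pred[OF A] IN by simp
  then have "wit (Ps N) (delta N A) A" using i A by (auto simp: Inv_def)
  then obtain C \<sigma> where C: "C \<in> Ps N" "ground_subst \<sigma>" "subst_hd \<sigma> (hd C) = A" "gsat M0 (subst_goal \<sigma> (bd C))"
    "wsum w (subst_goal \<sigma> (bd C)) + delta N A \<le> w A" unfolding wit_def by blast
  have "mu N (p, ts) < mu N A" if r: "Rel p ts \<in> set (subst_goal \<sigma> (bd C))" for p ts
  proof -
    have wB: "w (p, ts) \<le> wsum w (subst_goal \<sigma> (bd C))" using wsum_le[OF r] .
    have BM: "(p, ts) \<in> M0" using C(4) r by (auto simp: gsat_def)
    have pr: "(p, length ts) \<in> Old \<union> FoldP N"
      using in_gpreds[OF r] in_bpreds[OF C(1)] b by (auto simp: BInv_def)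
    show ?thesis
    proof (cases "delta N A = 1")
      case True
      then show ?thesis using wB C(5) delta_le1[of N "(p, ts)"] by (simp add: mu_def)
    next
      case False
      then have dA: "delta N A = 0" using delta_le1[of N A] by simp
      have "delta N (p, ts) = 1"
      proof (cases "(p, length ts) \<in> Old")
        case True then show ?thesis by (simp add: delta_old hpred_def)
      next
        case False
        then have qF: "(p, length ts) \<in> FoldP N" using pr by simp
        then have "hpred (p, ts) \<in> Intro N" using FoldP_Intro[OF Nn] by (auto simp: hpred_def)
        then obtain D \<tau> where D: "D \<in> defs_upto lab N" "ground_subst \<tau>" "subst_hd \<tau> (hd D) = (p, ts)"
          "gsat M0 (subst_goal \<tau> (bd D))" "wsum w (subst_goal \<tau> (bd D)) \<le> w (p, ts)"
          using pred_new_wit[OF Nn BM] by blast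
        have DN: "D \<in> DN" using D(1) DN_upto[OF Nn] by auto
        have "hpred (hd D) = (p, length ts)" using D(3) hpred_subst[of \<tau> "hd D"] by (simp add: hpred_def)
        then obtain j where "j < N" "lab j = RUnfold D" using FU qF DN by blast
        then have "Ed N (p, ts)" unfolding Ed_def using D DN by blast
        then show ?thesis by (simp add: delta_Ed)
      qed
      then show ?thesis using wB C(5) dA by (simp add: mu_def)
    qed
  qed
  then show ?thesis using C by blast
qed

end


theorem theorem5:
  fixes Ps :: "nat \<Rightarrow> program" and lab :: "nat \<Rightarrow> rule_app" and n :: nat and p :: pred
  assumes seq: "transf_seq Ps lab n"
    and p_in: "p \<in> prog_preds (Ps n)"
    and fold_cond: "\<forall>k<n. \<forall>newp. lab k = RFold newp \<longrightarrow>
                      (\<forall>D\<in>defs_upto lab k. hpred (hd D) = newp \<longrightarrow>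
                         (\<exists>j. 1 \<le> j \<and> j \<le> n - 1 \<and> D \<in> Ps j \<and> lab j = RUnfold D))"
    and elim_cond: "\<forall>k<n. \<forall>q. lab k = RElim q \<longrightarrow> k = n - 1 \<and> q = p"
  shows "\<forall>A. ground_hatom A \<and> hpred A = p \<longrightarrow>
           (A \<in> least_model (Ps 0 \<union> defs_upto lab n) \<longleftrightarrow> A \<in> least_model (Ps n))"
proof -
  interpret tseq Ps lab n using seq by unfold_locales
  define el where "el = (0 < n \<and> (\<exists>q. lab (n - 1) = RElim q))"
  define N where "N = (if el then n - 1 else n)"
  have Nn: "N \<le> n" by (simp add: N_def)
  have noel: "\<forall>k<N. \<forall>q. lab k \<noteq> RElim q"
  proof (intro allI impI)
    fix k q assume k: "k < N"
    show "lab k \<noteq> RElim q"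
    proof
      assume e: "lab k = RElim q"
      have "k < n" using k Nn by simp
      then have "k = n - 1" using elim_cond e by blast
      then show False using k e by (auto simp: N_def el_def split: if_splits)
    qed
  qed
  have st: "models M0 (Ps N) \<and> BInv N \<and> Inv N" using all_steps[OF Nn noel] .
  have IN: "Intro N = Intro n"
  proof (cases el)
    case True
    then have n: "n = Suc (n - 1)" "N = n - 1" by (auto simp: el_def N_def)
    obtain q where "lab (n - 1) = RElim q" using True by (auto simp: el_def)
    then have "Intro (Suc (n - 1)) = Intro (n - 1)" using Intro_Suc_same by auto
    then show ?thesis using n by metis
  next
    case False then show ?thesis by (simp add: N_def)
  qed
  have FU: "\<forall>q\<in>FoldP N. \<forall>D\<in>DN. hpred (hd D) = q \<longrightarrow> (\<exists>j<N. lab j = RUnfold D)"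
  proof (intro ballI impI)
    fix q D assume q: "q \<in> FoldP N" and D: "D \<in> DN" "hpred (hd D) = q"
    obtain k' where k': "k' < N" "lab k' = RFold q" using q by (auto simp: FoldP_def)
    have k'n: "k' < n" using k' Nn by simp
    have "q \<in> Intro k'" using fold_ne[OF k'n k'(2)] .
    then have "D \<in> defs_upto lab k'" using DN_in_k[of k' D] k'n D by auto
    then obtain j where j: "1 \<le> j" "j \<le> n - 1" "lab j = RUnfold D"
      using fold_cond k'n k'(2) D(2) by blast
    have "j < N"
    proof (cases el)
      case True
      then obtain q0 where "lab (n - 1) = RElim q0" by (auto simp: el_def)
      then have "j \<noteq> n - 1" using j(3) by auto
      then show ?thesis using j(2) True by (simp add: N_def)
    next
      case False then show ?thesis using j(2) k'n by (simp add: N_def)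
    qed
    then show "\<exists>j<N. lab j = RUnfold D" using j(3) by blast
  qed
  have sub: "Ps n \<subseteq> Ps N"
  proof (cases el)
    case True
    then obtain q0 where q0: "lab (n - 1) = RElim q0" and n: "n = Suc (n - 1)" by (auto simp: el_def)
    have "def_elim (Ps (n - 1)) q0 (Ps (Suc (n - 1)))" using st_elim[of "n - 1" q0] q0 n by simp
    then show ?thesis using n True by (auto simp: def_elim_def N_def)
  next
    case False then show ?thesis by (simp add: N_def)
  qed
  have sound: "least_model (Ps n) \<subseteq> M0"
    using lm_least[OF M0_herbrand models_subset[OF conjunct1[OF st] sub]] .
  have M0eq: "least_model (Ps 0 \<union> defs_upto lab n) = M0" by (simp add: M0_def Q_def DN_def)
  have basic: "\<forall>a\<in>set G. \<not> is_nonbasic a \<longrightarrow> hsat {} a" if "gsat M0 G" for G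
    using that hsat_basic by (auto simp: gsat_def)
  have atoms: "(p', ts) \<in> M0" if "gsat M0 G" "Rel p' ts \<in> set G" for G p' ts
    using that by (auto simp: gsat_def)
  have complete: "A \<in> least_model (Ps n)" if A: "A \<in> M0" "hpred A = p" for A
  proof (cases el)
    case False
    then have PN: "Ps N = Ps n" by (simp add: N_def)
    show ?thesis
    proof (rule wf_complete[where R = "\<lambda>A. A \<in> M0" and \<mu> = "mu N"])
      fix B assume B: "B \<in> M0"
      obtain C \<sigma> where C: "C \<in> Ps N" "ground_subst \<sigma>" "subst_hd \<sigma> (hd C) = B" "gsat M0 (subst_goal \<sigma> (bd C))"
        "\<forall>p ts. Rel p ts \<in> set (subst_goal \<sigma> (bd C)) \<longrightarrow> mu N (p, ts) < mu N B"
        using witN[OF Nn _ _ IN FU B] st by blast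
      show "\<exists>C\<in>Ps n. \<exists>\<sigma>. ground_subst \<sigma> \<and> subst_hd \<sigma> (hd C) = B \<and>
       (\<forall>a\<in>set (subst_goal \<sigma> (bd C)). \<not> is_nonbasic a \<longrightarrow> hsat {} a) \<and>
       (\<forall>p ts. Rel p ts \<in> set (subst_goal \<sigma> (bd C)) \<longrightarrow> (p, ts) \<in> M0 \<and> mu N (p, ts) < mu N B)"
        using C PN basic[OF C(4)] atoms[OF C(4)] by blast
    qed (rule A(1))
  next
    case True
    then obtain q0 where q0: "lab (n - 1) = RElim q0" and n: "n = Suc (n - 1)" and NN: "N = n - 1"
      by (auto simp: el_def N_def)
    have "q0 = p" using elim_cond q0 n by (metis lessI)
    then have de: "def_elim (Ps N) p (Ps n)" using st_elim[of "n - 1" q0] q0 n NN by (metis lessI)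
    then have Pn: "Ps n = {C \<in> Ps N. depends_cl (Ps N) p C}" by (simp add: def_elim_def)
    show ?thesis
    proof (rule wf_complete[where R = "\<lambda>A. A \<in> M0 \<and> (hpred A = p \<or> depends (Ps N) p (hpred A))" and \<mu> = "mu N"])
      fix B assume B: "B \<in> M0 \<and> (hpred B = p \<or> depends (Ps N) p (hpred B))"
      obtain C \<sigma> where C: "C \<in> Ps N" "ground_subst \<sigma>" "subst_hd \<sigma> (hd C) = B" "gsat M0 (subst_goal \<sigma> (bd C))"
        "\<forall>p ts. Rel p ts \<in> set (subst_goal \<sigma> (bd C)) \<longrightarrow> mu N (p, ts) < mu N B"
        using witN[OF Nn _ _ IN FU] B st by blast
      have hC: "hpred (hd C) = hpred B" using C(3) hpred_subst[of \<sigma> "hd C"] by simp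
      have CPn: "C \<in> Ps n" using Pn C(1) B hC by (auto simp: depends_cl_def)
      have dep: "depends (Ps N) p (p', length ts)" if r: "Rel p' ts \<in> set (subst_goal \<sigma> (bd C))" for p' ts
      proof -
        have "(p', length ts) \<in> gpreds (bd C)" using in_gpreds[OF r] by simp
        then have e: "(hpred (hd C), (p', length ts)) \<in> dep1 (Ps N)" using C(1) by (auto simp: dep1_def)
        show ?thesis
        proof (cases "hpred B = p")
          case True then show ?thesis using e hC by (auto simp: depends_def)
        next
          case False
          then have "(p, hpred (hd C)) \<in> (dep1 (Ps N))\<^sup>+" using B hC by (auto simp: depends_def)
          then show ?thesis using e by (auto simp: depends_def)
        qed
      qed
      show "\<exists>C\<in>Ps n. \<exists>\<sigma>. ground_subst \<sigma> \<and> subst_hd \<sigma> (hd C) = B \<and>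
       (\<forall>a\<in>set (subst_goal \<sigma> (bd C)). \<not> is_nonbasic a \<longrightarrow> hsat {} a) \<and>
       (\<forall>p' ts. Rel p' ts \<in> set (subst_goal \<sigma> (bd C)) \<longrightarrow>
          ((p', ts) \<in> M0 \<and> (hpred (p', ts) = p \<or> depends (Ps N) p (hpred (p', ts)))) \<and> mu N (p', ts) < mu N B)"
      proof (rule bexI[OF _ CPn], rule exI[of _ \<sigma>], intro conjI)
        show "ground_subst \<sigma>" "subst_hd \<sigma> (hd C) = B" using C by auto
        show "\<forall>a\<in>set (subst_goal \<sigma> (bd C)). \<not> is_nonbasic a \<longrightarrow> hsat {} a" using basic[OF C(4)] .
        show "\<forall>p' ts. Rel p' ts \<in> set (subst_goal \<sigma> (bd C)) \<longrightarrow>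
          ((p', ts) \<in> M0 \<and> (hpred (p', ts) = p \<or> depends (Ps N) p (hpred (p', ts)))) \<and> mu N (p', ts) < mu N B"
          using C(5) atoms[OF C(4)] dep by (simp add: hpred_def)
      qed
    qed (use A in auto)
  qed
  show ?thesis using sound complete M0eq by blast
qed


end
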